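(* Let $\varepsilon$ be a locally variational source form on $\mathbb{R}\times T^2M$. Then the local expressions $$\omega=\tfrac12\,D(x,y,0,0)\,dx\wedge dy$$ and $$\kappa=-\Big(\int_0^{\dot x}B_{xx}(x,y,\nu,\dot y)\,d\nu+\int_0^{\dot y}B_{xy}(x,y,0,\sigma)\,d\sigma\Big)dx-\Big(\int_0^{\dot x}B_{xy}(x,y,\nu,\dot y)\,d\nu+\int_0^{\dot y}B_{yy}(x,y,0,\sigma)\,d\sigma\Big)dy,$$ defined in each chart, are independent of the chart, i.e. they define a global $2$-form $\omega$ on $M$ (hence on $T^1M$) and a global $1$-form $\kappa$ on $T^1M$. Consequently $\alpha'-\omega=d\kappa$ holds globally on $T^1M$, where $\alpha'=\tfrac12 D\,dx\wedge dy+(B_{xx}dx+B_{xy}dy)\wedge d\dot x+(B_{xy}dx+B_{yy}dy)\wedge d\dot y$.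
   Context: Setting: $M$ is a smooth connected $2$-manifold, $Y=\mathbb{R}\times M$; $J^{1}Y\cong\mathbb{R}\times T^{1}M$, $J^{2}Y\cong\mathbb{R}\times T^{2}M$, with chart coordinates $(t,x,y,\dot x,\dot y)$, $(t,x,y,\dot x,\dot y,\ddot x,\ddot y)$ induced by charts $(x,y)$ on $M$ (tangent coordinates $\dot x,\dot y$ transform linearly under chart changes). Contact forms $\omega^x=dx-\dot x dt$, $\omega^y=dy-\dot y dt$. A source form $\varepsilon=(\varepsilon_x\omega^x+\varepsilon_y\omega^y)\wedge dt$ on $\mathbb{R}\times T^2M$ is locally variational iff locally it is the Euler–Lagrange form of a first-order Lagrangian; equivalently in every chart $\varepsilon_x=A_x+B_{xx}\ddot x+B_{xy}\ddot y$, $\varepsilon_y=A_y+B_{xy}\ddot x+B_{yy}\ddot y$ with $A_x,A_y,B_{xx},B_{xy},B_{yy}$ functions of $(x,y,\dot x,\dot y)$ satisfying the Helmholtz conditions: $\partial B_{xx}/\partial\dot y=\partial B_{xy}/\partial\dot x$, $\partial B_{yy}/\partial\dot x=\partial B_{xy}/\partial\dot y$, $\partial A_x/\partial\dot x-\dot x\,\partial B_{xx}/\partial x-\dot y\,\partial B_{xx}/\partial y=0$, $\partial A_y/\partial\dot y-\dot x\,\partial B_{yy}/\partial x-\dot y\,\partial B_{yy}/\partial y=0$, $\partial A_x/\partial\dot y+\partial A_y/\partial\dot x-2\dot x\,\partial B_{xy}/\partial x-2\dot y\,\partial B_{xy}/\partial y=0$, $\partial A_x/\partial y-\partial A_y/\partial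 x-\frac12\dot x\,\partial_x D-\frac12\dot y\,\partial_y D=0$, where $D=\partial A_x/\partial\dot y-\partial A_y/\partial\dot x$. *)

theory Defs
  imports "HOL-Analysis.Analysis"
begin

fun Ck_on :: "nat \<Rightarrow> 'a::euclidean_space set \<Rightarrow> ('a \<Rightarrow> real) \<Rightarrow> bool" where
  "Ck_on 0 S f = continuous_on S f"
| "Ck_on (Suc k) S f =
     ((\<forall>p\<in>S. f differentiable (at p)) \<and>
      (\<forall>w. Ck_on k S (\<lambda>p. frechet_derivative f (at p) w)))"

definition smooth_on :: "'a::euclidean_space set \<Rightarrow> ('a \<Rightarrow> real) \<Rightarrow> bool" where
  "smooth_on S f \<longleftrightarrow> (\<forall>k. Ck_on k S f)"

text \<open>Functions of chart coordinates (x,y) on an open chart domain U,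
  and functions of tangent-bundle coordinates (x,y,xdot,ydot) on U x R^2.\<close>

definition smooth2 :: "(real \<times> real) set \<Rightarrow> (real \<Rightarrow> real \<Rightarrow> real) \<Rightarrow> bool" where
  "smooth2 U f \<longleftrightarrow> smooth_on U (\<lambda>(x, y). f x y)"

definition smooth4 :: "(real \<times> real) set \<Rightarrow> (real \<Rightarrow> real \<Rightarrow> real \<Rightarrow> real \<Rightarrow> real) \<Rightarrow> bool" where
  "smooth4 U f \<longleftrightarrow> smooth_on (U \<times> UNIV) (\<lambda>((x, y), (u, v)). f x y u v)"

definition px :: "(real \<Rightarrow> real \<Rightarrow> real) \<Rightarrow> real \<Rightarrow> real \<Rightarrow> real" where
  "px f x y = deriv (\<lambda>s. f s y) x"
definition py :: "(real \<Rightarrow> real \<Rightarrow> real) \<Rightarrow> real \<Rightarrow> real \<Rightarrow> real" where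
  "py f x y = deriv (\<lambda>s. f x s) y"

definition d1 :: "(real \<Rightarrow> real \<Rightarrow> real \<Rightarrow> real \<Rightarrow> real) \<Rightarrow> real \<Rightarrow> real \<Rightarrow> real \<Rightarrow> real \<Rightarrow> real" where
  "d1 f x y u v = deriv (\<lambda>s. f s y u v) x"
definition d2 :: "(real \<Rightarrow> real \<Rightarrow> real \<Rightarrow> real \<Rightarrow> real) \<Rightarrow> real \<Rightarrow> real \<Rightarrow> real \<Rightarrow> real \<Rightarrow> real" where
  "d2 f x y u v = deriv (\<lambda>s. f x s u v) y"
definition d3 :: "(real \<Rightarrow> real \<Rightarrow> real \<Rightarrow> real \<Rightarrow> real) \<Rightarrow> real \<Rightarrow> real \<Rightarrow> real \<Rightarrow> real \<Rightarrow> real" where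
  "d3 f x y u v = deriv (\<lambda>s. f x y s v) u"
definition d4 :: "(real \<Rightarrow> real \<Rightarrow> real \<Rightarrow> real \<Rightarrow> real) \<Rightarrow> real \<Rightarrow> real \<Rightarrow> real \<Rightarrow> real \<Rightarrow> real" where
  "d4 f x y u v = deriv (\<lambda>s. f x y u s) v"

definition oint :: "real \<Rightarrow> real \<Rightarrow> (real \<Rightarrow> real) \<Rightarrow> real" where
  "oint a b f = (if a \<le> b then integral {a..b} f else - integral {b..a} f)"

definition Dfun :: "(real \<Rightarrow> real \<Rightarrow> real \<Rightarrow> real \<Rightarrow> real) \<Rightarrow> (real \<Rightarrow> real \<Rightarrow> real \<Rightarrow> real \<Rightarrow> real)
                    \<Rightarrow> real \<Rightarrow> real \<Rightarrow> real \<Rightarrow> real \<Rightarrow> real" where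
  "Dfun Ax Ay x y u v = d4 Ax x y u v - d3 Ay x y u v"

definition helmholtz ::
  "(real \<times> real) set \<Rightarrow> (real \<Rightarrow> real \<Rightarrow> real \<Rightarrow> real \<Rightarrow> real) \<Rightarrow> (real \<Rightarrow> real \<Rightarrow> real \<Rightarrow> real \<Rightarrow> real)
   \<Rightarrow> (real \<Rightarrow> real \<Rightarrow> real \<Rightarrow> real \<Rightarrow> real) \<Rightarrow> (real \<Rightarrow> real \<Rightarrow> real \<Rightarrow> real \<Rightarrow> real)
   \<Rightarrow> (real \<Rightarrow> real \<Rightarrow> real \<Rightarrow> real \<Rightarrow> real) \<Rightarrow> bool" where
  "helmholtz U Ax Ay Bxx Bxy Byy \<longleftrightarrow>
     smooth4 U Ax \<and> smooth4 U Ay \<and> smooth4 U Bxx \<and> smooth4 U Bxy \<and> smooth4 U Byy \<and>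
     (\<forall>x y u v. (x, y) \<in> U \<longrightarrow>
        d4 Bxx x y u v = d3 Bxy x y u v \<and>
        d3 Byy x y u v = d4 Bxy x y u v \<and>
        d3 Ax x y u v - u * d1 Bxx x y u v - v * d2 Bxx x y u v = 0 \<and>
        d4 Ay x y u v - u * d1 Byy x y u v - v * d2 Byy x y u v = 0 \<and>
        d4 Ax x y u v + d3 Ay x y u v - 2 * u * d1 Bxy x y u v - 2 * v * d2 Bxy x y u v = 0 \<and>
        d2 Ax x y u v - d1 Ay x y u v
          - u / 2 * d1 (Dfun Ax Ay) x y u v - v / 2 * d2 (Dfun Ax Ay) x y u v = 0)"

text \<open>Components of the source form: eps_x = A_x + B_xx xddot + B_xy yddot, etc.
  Arguments: x y xdot ydot xddot yddot.\<close>
definition eps_x :: "(real \<Rightarrow> real \<Rightarrow> real \<Rightarrow> real \<Rightarrow> real) \<Rightarrow> (real \<Rightarrow> real \<Rightarrow> real \<Rightarrow> real \<Rightarrow> real)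
   \<Rightarrow> (real \<Rightarrow> real \<Rightarrow> real \<Rightarrow> real \<Rightarrow> real) \<Rightarrow> real \<Rightarrow> real \<Rightarrow> real \<Rightarrow> real \<Rightarrow> real \<Rightarrow> real \<Rightarrow> real" where
  "eps_x Ax Bxx Bxy x y u v a b = Ax x y u v + Bxx x y u v * a + Bxy x y u v * b"

definition eps_y :: "(real \<Rightarrow> real \<Rightarrow> real \<Rightarrow> real \<Rightarrow> real) \<Rightarrow> (real \<Rightarrow> real \<Rightarrow> real \<Rightarrow> real \<Rightarrow> real)
   \<Rightarrow> (real \<Rightarrow> real \<Rightarrow> real \<Rightarrow> real \<Rightarrow> real) \<Rightarrow> real \<Rightarrow> real \<Rightarrow> real \<Rightarrow> real \<Rightarrow> real \<Rightarrow> real \<Rightarrow> real" where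
  "eps_y Ay Bxy Byy x y u v a b = Ay x y u v + Bxy x y u v * a + Byy x y u v * b"

text \<open>omega = omega_coef dx /\ dy, omega_coef = D(x,y,0,0)/2\<close>
definition omega_coef :: "(real \<Rightarrow> real \<Rightarrow> real \<Rightarrow> real \<Rightarrow> real) \<Rightarrow> (real \<Rightarrow> real \<Rightarrow> real \<Rightarrow> real \<Rightarrow> real)
   \<Rightarrow> real \<Rightarrow> real \<Rightarrow> real" where
  "omega_coef Ax Ay x y = Dfun Ax Ay x y 0 0 / 2"

text \<open>kappa = kappa_x dx + kappa_y dy\<close>
definition kappa_x :: "(real \<Rightarrow> real \<Rightarrow> real \<Rightarrow> real \<Rightarrow> real) \<Rightarrow> (real \<Rightarrow> real \<Rightarrow> real \<Rightarrow> real \<Rightarrow> real)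
   \<Rightarrow> real \<Rightarrow> real \<Rightarrow> real \<Rightarrow> real \<Rightarrow> real" where
  "kappa_x Bxx Bxy x y u v =
     - (oint 0 u (\<lambda>\<nu>. Bxx x y \<nu> v) + oint 0 v (\<lambda>\<sigma>. Bxy x y 0 \<sigma>))"

definition kappa_y :: "(real \<Rightarrow> real \<Rightarrow> real \<Rightarrow> real \<Rightarrow> real) \<Rightarrow> (real \<Rightarrow> real \<Rightarrow> real \<Rightarrow> real \<Rightarrow> real)
   \<Rightarrow> real \<Rightarrow> real \<Rightarrow> real \<Rightarrow> real \<Rightarrow> real" where
  "kappa_y Bxy Byy x y u v =
     - (oint 0 u (\<lambda>\<nu>. Bxy x y \<nu> v) + oint 0 v (\<lambda>\<sigma>. Byy x y 0 \<sigma>))"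

definition diffeo2 :: "(real \<times> real) set \<Rightarrow> (real \<times> real) set \<Rightarrow> (real \<Rightarrow> real \<Rightarrow> real) \<Rightarrow> (real \<Rightarrow> real \<Rightarrow> real)
   \<Rightarrow> (real \<Rightarrow> real \<Rightarrow> real) \<Rightarrow> (real \<Rightarrow> real \<Rightarrow> real) \<Rightarrow> bool" where
  "diffeo2 U V p1 p2 q1 q2 \<longleftrightarrow>
     open U \<and> open V \<and> smooth2 U p1 \<and> smooth2 U p2 \<and> smooth2 V q1 \<and> smooth2 V q2 \<and>
     (\<forall>x y. (x, y) \<in> U \<longrightarrow> (p1 x y, p2 x y) \<in> V \<and> q1 (p1 x y) (p2 x y) = x \<and> q2 (p1 x y) (p2 x y) = y) \<and>
     (\<forall>x y. (x, y) \<in> V \<longrightarrow> (q1 x y, q2 x y) \<in> U \<and> p1 (q1 x y) (q2 x y) = x \<and> p2 (q1 x y) (q2 x y) = y)"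

definition vel :: "(real \<Rightarrow> real \<Rightarrow> real) \<Rightarrow> real \<Rightarrow> real \<Rightarrow> real \<Rightarrow> real \<Rightarrow> real" where
  "vel p x y u v = px p x y * u + py p x y * v"

definition acc :: "(real \<Rightarrow> real \<Rightarrow> real) \<Rightarrow> real \<Rightarrow> real \<Rightarrow> real \<Rightarrow> real \<Rightarrow> real \<Rightarrow> real \<Rightarrow> real" where
  "acc p x y u v a b = px p x y * a + py p x y * b
     + px (px p) x y * u * u + (px (py p) x y + py (px p) x y) * u * v + py (py p) x y * v * v"

end

theory Submission
  imports Defs
begin

lemma oint_ftc:
  fixes G g :: "real \<Rightarrow> real"
  assumes "\<And>t. t \<in> {min a b..max a b} \<Longrightarrow> (G has_real_derivative g t) (at t within {min a b..max a b})"
  shows "oint a b g = G b - G a"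
proof (cases "a \<le> b")
  case True
  then have "(g has_integral (G b - G a)) {a..b}"
    using assms by (intro fundamental_theorem_of_calculus)
      (auto simp: has_real_derivative_iff_has_vector_derivative[symmetric] min_def max_def)
  then show ?thesis using True by (simp add: oint_def integral_unique)
next
  case False
  then have "(g has_integral (G a - G b)) {b..a}"
    using assms by (intro fundamental_theorem_of_calculus)
      (auto simp: has_real_derivative_iff_has_vector_derivative[symmetric] min_def max_def)
  then show ?thesis using False by (simp add: oint_def integral_unique)
qed

lemma oint_same[simp]: "oint a a f = 0"
  by (simp add: oint_def)

lemma oint_deriv_upper:
  fixes g :: "real \<Rightarrow> real"
  assumes "continuous_on {lo..hi} g" "a \<in> {lo..hi}" "lo < s0" "s0 < hi"
  shows "((\<lambda>s. oint a s g) has_real_derivative g s0) (at s0)"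
proof -
  obtain G where G: "\<And>t. t \<in> {lo..hi} \<Longrightarrow> (G has_vector_derivative g t) (at t within {lo..hi})"
    using antiderivative_continuous[of lo hi g] assms(1) by auto
  have eq: "oint a s g = G s - G a" if "s \<in> {lo<..<hi}" for s
  proof (rule oint_ftc)
    fix t assume t: "t \<in> {min a s..max a s}"
    have sub: "{min a s..max a s} \<subseteq> {lo..hi}" using that assms(2) by auto
    have "t \<in> {lo..hi}" using t sub by auto
    then show "(G has_real_derivative g t) (at t within {min a s..max a s})"
      using has_vector_derivative_within_subset[OF G[OF \<open>t \<in> {lo..hi}\<close>] sub]
      by (simp add: has_real_derivative_iff_has_vector_derivative)
  qed
  have "(G has_real_derivative g s0) (at s0)"
    using G[of s0] assms by (simp add: has_real_derivative_iff_has_vector_derivative at_within_Icc_at)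
  then have "((\<lambda>s. G s - G a) has_real_derivative g s0) (at s0)"
    by (auto intro!: derivative_eq_intros)
  then show ?thesis
  proof (rule has_field_derivative_transform_within_open[where S="{lo<..<hi}"])
    show "s0 \<in> {lo<..<hi}" using assms(3,4) by simp
    fix s assume "s \<in> {lo<..<hi}"
    then show "G s - G a = oint a s g" using eq[of s] by simp
  qed simp
qed

lemma oint_deriv_upper_UNIV:
  fixes g :: "real \<Rightarrow> real"
  assumes "continuous_on UNIV g"
  shows "((\<lambda>s. oint a s g) has_real_derivative g s0) (at s0)"
proof (rule oint_deriv_upper[where lo="min a s0 - 1" and hi="max a s0 + 1"])
  show "continuous_on {min a s0 - 1..max a s0 + 1} g"
    using continuous_on_subset[OF assms] by blast
qed auto

lemma oint_leibniz:
  fixes f fx :: "real \<Rightarrow> real \<Rightarrow> real"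
  assumes fx: "\<And>x t. x \<in> ball x0 r \<Longrightarrow> t \<in> {min a b..max a b} \<Longrightarrow> ((\<lambda>x. f x t) has_real_derivative fx x t) (at x)"
    and fc: "\<And>x. x \<in> ball x0 r \<Longrightarrow> continuous_on {min a b..max a b} (f x)"
    and cont: "continuous_on (ball x0 r \<times> {min a b..max a b}) (\<lambda>(x,t). fx x t)"
    and r: "r > 0"
  shows "((\<lambda>x. oint a b (f x)) has_real_derivative oint a b (fx x0)) (at x0)"
proof -
  let ?lo = "min a b" and ?hi = "max a b"
  have LL: "((\<lambda>x. integral (cbox ?lo ?hi) (f x)) has_field_derivative integral (cbox ?lo ?hi) (fx x0)) (at x0 within ball x0 r)"
  proof (rule leibniz_rule_field_derivative)
    fix x t assume "x \<in> ball x0 r" "t \<in> cbox ?lo ?hi"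
    then show "((\<lambda>x. f x t) has_field_derivative fx x t) (at x within ball x0 r)"
      using fx[of x t] by (simp add: has_field_derivative_at_within)
  next
    fix x assume "x \<in> ball x0 r"
    then show "f x integrable_on cbox ?lo ?hi"
      using fc[of x] by (simp add: integrable_continuous_interval)
  next
    show "continuous_on (ball x0 r \<times> cbox ?lo ?hi) (\<lambda>(x, t). fx x t)"
      using cont by simp
  next
    show "x0 \<in> ball x0 r" using r by simp
  qed (rule convex_ball)
  have L: "((\<lambda>x. integral {?lo..?hi} (f x)) has_field_derivative integral {?lo..?hi} (fx x0)) (at x0)"
  proof -
    have atw: "at x0 within ball x0 r = at x0" by (rule at_within_open) (use r in auto)
    show ?thesis using LL unfolding atw cbox_interval .
  qed
  show ?thesis
  proof (cases "a \<le> b")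
    case True
    then show ?thesis using L by (simp add: oint_def min_def max_def)
  next
    case False
    then show ?thesis using DERIV_minus[OF L] by (simp add: oint_def min_def max_def)
  qed
qed

lemma oint_diff:
  fixes f g :: "real \<Rightarrow> real"
  assumes "continuous_on {min a b..max a b} f" "continuous_on {min a b..max a b} g"
  shows "oint a b (\<lambda>t. f t - g t) = oint a b f - oint a b g"
proof -
  have "f integrable_on {min a b..max a b}" "g integrable_on {min a b..max a b}"
    using assms by (simp_all add: integrable_continuous_interval)
  then show ?thesis
    by (cases "a \<le> b") (simp_all add: oint_def min_def max_def integral_diff)
qed

lemma Ck_on_cong:
  assumes "open S" "\<And>p. p \<in> S \<Longrightarrow> f p = g p" "Ck_on k S f"
  shows "Ck_on k S g"
  using assms(2,3)
proof (induction k arbitrary: f g)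
  case 0
  then show ?case using continuous_on_cong[of S S f g] by simp
next
  case (Suc k)
  have dif: "\<forall>p\<in>S. f differentiable (at p)" and hw: "\<And>w. Ck_on k S (\<lambda>p. frechet_derivative f (at p) w)"
    using Suc.prems(2) by auto
  have "\<forall>p\<in>S. g differentiable (at p)"
  proof
    fix p assume p: "p \<in> S"
    then have "(f has_derivative frechet_derivative f (at p)) (at p)"
      using dif frechet_derivative_works by blast
    then have "(g has_derivative frechet_derivative f (at p)) (at p)"
      by (rule has_derivative_transform_within_open[OF _ assms(1) p]) (use Suc.prems(1) in auto)
    then show "g differentiable (at p)" by (auto simp: differentiable_def)
  qed
  moreover have "Ck_on k S (\<lambda>p. frechet_derivative g (at p) w)" for w
  proof (rule Suc.IH[OF _ hw[of w]])
    fix p assume p: "p \<in> S"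
    have "frechet_derivative f (at p) = frechet_derivative g (at p)"
      by (rule frechet_derivative_transform_within_open[OF _ assms(1) p]) (use dif p Suc.prems(1) in auto)
    then show "frechet_derivative f (at p) w = frechet_derivative g (at p) w" by simp
  qed
  ultimately show ?case by simp
qed

lemma smooth_on_cong:
  assumes "open S" "\<And>p. p \<in> S \<Longrightarrow> f p = g p" "smooth_on S f"
  shows "smooth_on S g"
  using assms Ck_on_cong unfolding smooth_on_def by blast

lemma smooth_on_differentiable:
  assumes "smooth_on S F" "p \<in> S"
  shows "F differentiable (at p)"
proof -
  have "Ck_on (Suc 0) S F" using assms(1) unfolding smooth_on_def by blast
  then show ?thesis using assms(2) by simp
qed

lemma smooth_on_continuous:
  assumes "smooth_on S F"
  shows "continuous_on S F"
proof -
  have "Ck_on 0 S F" using assms(1) unfolding smooth_on_def by blast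
  then show ?thesis by simp
qed

lemma smooth_on_frechet:
  assumes "smooth_on S F"
  shows "smooth_on S (\<lambda>q. frechet_derivative F (at q) w)"
  unfolding smooth_on_def
proof
  fix k
  have "Ck_on (Suc k) S F" using assms(1) unfolding smooth_on_def by blast
  then show "Ck_on k S (\<lambda>q. frechet_derivative F (at q) w)" by simp
qed

lemma line_deriv:
  fixes G :: "'a::real_normed_vector \<Rightarrow> real"
  assumes "G differentiable (at (c + s0 *\<^sub>R w))"
  shows "((\<lambda>s. G (c + s *\<^sub>R w)) has_real_derivative frechet_derivative G (at (c + s0 *\<^sub>R w)) w) (at s0)"
proof -
  let ?G' = "frechet_derivative G (at (c + s0 *\<^sub>R w))"
  have 1: "(G has_derivative ?G') (at (c + s0 *\<^sub>R w))"
    using assms frechet_derivative_works by blast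
  have 2: "((\<lambda>s. c + s *\<^sub>R w) has_derivative (\<lambda>h. h *\<^sub>R w)) (at s0)"
    by (auto intro!: derivative_eq_intros)
  have 3: "((G \<circ> (\<lambda>s. c + s *\<^sub>R w)) has_derivative (?G' \<circ> (\<lambda>h. h *\<^sub>R w))) (at s0)"
    using diff_chain_at[OF 2 1] by simp
  have lin: "linear ?G'" using assms by (rule linear_frechet_derivative)
  have 4: "(?G' \<circ> (\<lambda>h. h *\<^sub>R w)) = (*) (?G' w)"
  proof
    fix h show "(?G' \<circ> (\<lambda>h. h *\<^sub>R w)) h = ?G' w * h"
      using linear_cmul[OF lin, of h w] by (simp add: o_def mult.commute)
  qed
  show ?thesis using 3[unfolded 4] unfolding has_field_derivative_def comp_def .
qed

lemma clairaut2:
  fixes g gs gt gst gts :: "real \<Rightarrow> real \<Rightarrow> real"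
  assumes e: "e > 0"
    and gs: "\<And>s t. \<bar>s\<bar> < e \<Longrightarrow> \<bar>t\<bar> < e \<Longrightarrow> ((\<lambda>s. g s t) has_real_derivative gs s t) (at s)"
    and gt: "\<And>s t. \<bar>s\<bar> < e \<Longrightarrow> \<bar>t\<bar> < e \<Longrightarrow> ((\<lambda>t. g s t) has_real_derivative gt s t) (at t)"
    and gst: "\<And>s t. \<bar>s\<bar> < e \<Longrightarrow> \<bar>t\<bar> < e \<Longrightarrow> ((\<lambda>t. gs s t) has_real_derivative gst s t) (at t)"
    and gts: "\<And>s t. \<bar>s\<bar> < e \<Longrightarrow> \<bar>t\<bar> < e \<Longrightarrow> ((\<lambda>s. gt s t) has_real_derivative gts s t) (at s)"
    and cgs: "continuous_on ({-e<..<e} \<times> {-e<..<e}) (\<lambda>(s,t). gs s t)"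
    and cgst: "continuous_on ({-e<..<e} \<times> {-e<..<e}) (\<lambda>(s,t). gst s t)"
  shows "gts 0 0 = gst 0 0"
proof -
  have step1: "g s t - g 0 t = oint 0 s (\<lambda>\<sigma>. gs \<sigma> t)" if st: "\<bar>s\<bar> < e" "\<bar>t\<bar> < e" for s t
  proof -
    have "oint 0 s (\<lambda>\<sigma>. gs \<sigma> t) = (\<lambda>\<sigma>. g \<sigma> t) s - (\<lambda>\<sigma>. g \<sigma> t) 0"
    proof (rule oint_ftc)
      fix \<sigma> assume "\<sigma> \<in> {min 0 s..max 0 s}"
      then have "\<bar>\<sigma>\<bar> < e" using st by auto
      then show "((\<lambda>\<sigma>. g \<sigma> t) has_real_derivative gs \<sigma> t) (at \<sigma> within {min 0 s..max 0 s})"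
        using gs[of \<sigma> t] st by (simp add: has_field_derivative_at_within)
    qed
    then show ?thesis by simp
  qed
  have step2: "gt s 0 - gt 0 0 = oint 0 s (\<lambda>\<sigma>. gst \<sigma> 0)" if s: "\<bar>s\<bar> < e" for s
  proof -
    have d1: "((\<lambda>t. g s t - g 0 t) has_real_derivative gt s 0 - gt 0 0) (at 0)"
      using gt[of s 0] gt[of 0 0] s e by (intro DERIV_diff) auto
    have d1': "((\<lambda>t. oint 0 s (\<lambda>\<sigma>. gs \<sigma> t)) has_real_derivative gt s 0 - gt 0 0) (at 0)"
    proof (rule has_field_derivative_transform_within_open[OF d1, of "{-e<..<e}"])
      fix t assume "t \<in> {-e<..<e}"
      then show "g s t - g 0 t = oint 0 s (\<lambda>\<sigma>. gs \<sigma> t)" using step1[of s t] s by auto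
    qed (use e in auto)
    have sub: "{min 0 s..max 0 s} \<subseteq> {-e<..<e}" using s by auto
    have d2: "((\<lambda>t. oint 0 s (\<lambda>\<sigma>. gs \<sigma> t)) has_real_derivative oint 0 s (\<lambda>\<sigma>. gst \<sigma> 0)) (at 0)"
    proof (rule oint_leibniz[where f="\<lambda>t \<sigma>. gs \<sigma> t" and fx="\<lambda>t \<sigma>. gst \<sigma> t" and r=e])
      fix x \<sigma> :: real assume "x \<in> ball 0 e" "\<sigma> \<in> {min 0 s..max 0 s}"
      then have "\<bar>x\<bar> < e" "\<bar>\<sigma>\<bar> < e" using s by (auto simp: dist_real_def)
      then show "((\<lambda>x. gs \<sigma> x) has_real_derivative gst \<sigma> x) (at x)" using gst by blast
    next
      fix x :: real assume "x \<in> ball 0 e"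
      then have x: "x \<in> {-e<..<e}" by (auto simp: dist_real_def)
      have "continuous_on {min 0 s..max 0 s} ((\<lambda>(s,t). gs s t) \<circ> (\<lambda>\<sigma>. (\<sigma>, x)))"
      proof (rule continuous_on_compose)
        show "continuous_on {min 0 s..max 0 s} (\<lambda>\<sigma>. (\<sigma>, x))" by (intro continuous_intros)
        show "continuous_on ((\<lambda>\<sigma>. (\<sigma>, x)) ` {min 0 s..max 0 s}) (\<lambda>(s,t). gs s t)"
          by (rule continuous_on_subset[OF cgs]) (use sub x in auto)
      qed
      then show "continuous_on {min 0 s..max 0 s} (\<lambda>\<sigma>. gs \<sigma> x)" by (simp add: o_def)
    next
      have "continuous_on (ball 0 e \<times> {min 0 s..max 0 s}) ((\<lambda>(s,t). gst s t) \<circ> (\<lambda>(x,\<sigma>). (\<sigma>, x)))"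
      proof (rule continuous_on_compose)
        show "continuous_on (ball 0 e \<times> {min 0 s..max 0 s}) (\<lambda>(x::real,\<sigma>::real). (\<sigma>, x))"
          by (simp add: case_prod_unfold continuous_on_Pair continuous_on_fst continuous_on_snd continuous_on_id)
        show "continuous_on ((\<lambda>(x,\<sigma>). (\<sigma>, x)) ` (ball 0 e \<times> {min 0 s..max 0 s})) (\<lambda>(s,t). gst s t)"
          by (rule continuous_on_subset[OF cgst]) (use sub in \<open>auto simp: dist_real_def\<close>)
      qed
      then show "continuous_on (ball 0 e \<times> {min 0 s..max 0 s}) (\<lambda>(x, t). gst t x)"
        by (simp add: o_def case_prod_unfold)
    qed (use e in auto)
    show ?thesis using DERIV_unique[OF d1' d2] .
  qed
  have d1: "((\<lambda>s. gt s 0 - gt 0 0) has_real_derivative gts 0 0) (at 0)"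
    using gts[of 0 0] e by (auto intro!: derivative_eq_intros)
  have d1': "((\<lambda>s. oint 0 s (\<lambda>\<sigma>. gst \<sigma> 0)) has_real_derivative gts 0 0) (at 0)"
  proof (rule has_field_derivative_transform_within_open[OF d1, of "{-e<..<e}"])
    fix s assume "s \<in> {-e<..<e}"
    then show "gt s 0 - gt 0 0 = oint 0 s (\<lambda>\<sigma>. gst \<sigma> 0)" using step2[of s] by auto
  qed (use e in auto)
  have d2: "((\<lambda>s. oint 0 s (\<lambda>\<sigma>. gst \<sigma> 0)) has_real_derivative gst 0 0) (at 0)"
  proof (rule oint_deriv_upper[where lo="-e/2" and hi="e/2"])
    have "continuous_on {-e/2..e/2} ((\<lambda>(s,t). gst s t) \<circ> (\<lambda>\<sigma>. (\<sigma>, 0)))"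
    proof (rule continuous_on_compose)
      show "continuous_on {-e/2..e/2} (\<lambda>\<sigma>. (\<sigma>, 0::real))" by (intro continuous_intros)
      show "continuous_on ((\<lambda>\<sigma>. (\<sigma>, 0::real)) ` {-e/2..e/2}) (\<lambda>(s,t). gst s t)"
        by (rule continuous_on_subset[OF cgst]) (use e in auto)
    qed
    then show "continuous_on {-e/2..e/2} (\<lambda>\<sigma>. gst \<sigma> 0)" by (simp add: o_def)
  qed (use e in auto)
  show ?thesis using DERIV_unique[OF d1' d2] .
qed

lemma smooth_comp_cont:
  fixes F :: "'a::euclidean_space \<Rightarrow> real"
  assumes "continuous_on S F" "continuous_on T h" "h ` T \<subseteq> S"
  shows "continuous_on T (\<lambda>x. F (h x))"
  using continuous_on_compose[OF assms(2) continuous_on_subset[OF assms(1,3)]] by (simp add: o_def)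

lemma clairaut:
  fixes F :: "'a::euclidean_space \<Rightarrow> real"
  assumes S: "open S" and sm: "smooth_on S F" and p: "p \<in> S"
  shows "frechet_derivative (\<lambda>q. frechet_derivative F (at q) z) (at p) w =
         frechet_derivative (\<lambda>q. frechet_derivative F (at q) w) (at p) z"
proof -
  obtain \<delta> where \<delta>: "\<delta> > 0" "ball p \<delta> \<subseteq> S" using S p openE by blast
  define e where "e = \<delta> / (norm w + norm z + 1)"
  have pos: "norm w + norm z + 1 > 0" by (simp add: add_nonneg_pos)
  have e: "e > 0" using \<delta> pos by (simp add: e_def)
  define q where "q = (\<lambda>s t. p + s *\<^sub>R w + t *\<^sub>R z)"
  have qS: "q s t \<in> S" if "\<bar>s\<bar> < e" "\<bar>t\<bar> < e" for s t
  proof -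
    have "norm (s *\<^sub>R w + t *\<^sub>R z) \<le> \<bar>s\<bar> * norm w + \<bar>t\<bar> * norm z"
      using norm_triangle_ineq[of "s *\<^sub>R w" "t *\<^sub>R z"] by simp
    also have "\<dots> \<le> e * norm w + e * norm z"
      using that by (intro add_mono mult_right_mono) auto
    also have "\<dots> < e * (norm w + norm z + 1)" using e by (simp add: algebra_simps)
    also have "\<dots> = \<delta>" unfolding e_def using pos by simp
    finally have "dist (q s t) p < \<delta>"
      by (simp add: q_def dist_norm add.assoc)
    then show ?thesis using \<delta> by (auto simp: dist_commute)
  qed
  define Fw where "Fw = (\<lambda>q. frechet_derivative F (at q) w)"
  define Fz where "Fz = (\<lambda>q. frechet_derivative F (at q) z)"
  have smw: "smooth_on S Fw" unfolding Fw_def by (rule smooth_on_frechet[OF sm])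
  have smz: "smooth_on S Fz" unfolding Fz_def by (rule smooth_on_frechet[OF sm])
  have smwz: "smooth_on S (\<lambda>q. frechet_derivative Fw (at q) z)" by (rule smooth_on_frechet[OF smw])
  have cq: "continuous_on A (\<lambda>(s,t). q s t)" for A
    unfolding q_def case_prod_unfold by (intro continuous_intros)
  have qimg: "(\<lambda>(s,t). q s t) ` ({-e<..<e} \<times> {-e<..<e}) \<subseteq> S" using qS by auto
  have "frechet_derivative Fz (at (q 0 0)) w = frechet_derivative Fw (at (q 0 0)) z"
  proof (rule clairaut2[OF e, where g="\<lambda>s t. F (q s t)" and gs="\<lambda>s t. Fw (q s t)" and gt="\<lambda>s t. Fz (q s t)"
        and gst="\<lambda>s t. frechet_derivative Fw (at (q s t)) z" and gts="\<lambda>s t. frechet_derivative Fz (at (q s t)) w"])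
    fix s t :: real assume st: "\<bar>s\<bar> < e" "\<bar>t\<bar> < e"
    have "q s t = (p + t *\<^sub>R z) + s *\<^sub>R w" "\<And>s'. q s' t = (p + t *\<^sub>R z) + s' *\<^sub>R w"
      unfolding q_def by (simp_all add: algebra_simps)
    then show "((\<lambda>s. F (q s t)) has_real_derivative Fw (q s t)) (at s)"
      using line_deriv[of F "p + t *\<^sub>R z" s w] smooth_on_differentiable[OF sm qS[OF st]]
      unfolding Fw_def by simp
    have "q s t = (p + s *\<^sub>R w) + t *\<^sub>R z" "\<And>t'. q s t' = (p + s *\<^sub>R w) + t' *\<^sub>R z"
      unfolding q_def by (simp_all add: algebra_simps)
    then show "((\<lambda>t. F (q s t)) has_real_derivative Fz (q s t)) (at t)"
      using line_deriv[of F "p + s *\<^sub>R w" t z] smooth_on_differentiable[OF sm qS[OF st]]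
      unfolding Fz_def by simp
    show "((\<lambda>t. Fw (q s t)) has_real_derivative frechet_derivative Fw (at (q s t)) z) (at t)"
      using line_deriv[of Fw "p + s *\<^sub>R w" t z] smooth_on_differentiable[OF smw qS[OF st]]
        \<open>q s t = (p + s *\<^sub>R w) + t *\<^sub>R z\<close> \<open>\<And>t'. q s t' = (p + s *\<^sub>R w) + t' *\<^sub>R z\<close>
      by simp
    show "((\<lambda>s. Fz (q s t)) has_real_derivative frechet_derivative Fz (at (q s t)) w) (at s)"
      using line_deriv[of Fz "p + t *\<^sub>R z" s w] smooth_on_differentiable[OF smz qS[OF st]]
        \<open>q s t = (p + t *\<^sub>R z) + s *\<^sub>R w\<close> \<open>\<And>s'. q s' t = (p + t *\<^sub>R z) + s' *\<^sub>R w\<close>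
      by simp
  next
    show "continuous_on ({-e<..<e} \<times> {-e<..<e}) (\<lambda>(s,t). Fw (q s t))"
      using smooth_comp_cont[OF smooth_on_continuous[OF smw] cq qimg] by (simp add: case_prod_unfold)
    show "continuous_on ({-e<..<e} \<times> {-e<..<e}) (\<lambda>(s,t). frechet_derivative Fw (at (q s t)) z)"
      using smooth_comp_cont[OF smooth_on_continuous[OF smwz] cq qimg] by (simp add: case_prod_unfold)
  qed
  moreover have "q 0 0 = p" by (simp add: q_def)
  ultimately show ?thesis unfolding Fw_def Fz_def by simp
qed

definition Fh :: "(real \<Rightarrow> real \<Rightarrow> real \<Rightarrow> real \<Rightarrow> real) \<Rightarrow> (real \<times> real) \<times> (real \<times> real) \<Rightarrow> real" where
  "Fh f = (\<lambda>((x, y), (u, v)). f x y u v)"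

lemma Fh_apply[simp]: "Fh f ((x,y),(u,v)) = f x y u v" by (simp add: Fh_def)

lemma smooth4_Fh: "smooth4 U f = smooth_on (U \<times> UNIV) (Fh f)"
  by (simp add: smooth4_def Fh_def)

lemma d_has:
  assumes U: "open U" and sm: "smooth4 U f" and xy: "(x,y) \<in> U"
  shows "((\<lambda>s. f s y u v) has_real_derivative frechet_derivative (Fh f) (at ((x,y),(u,v))) ((1,0),(0,0))) (at x)"
    and "((\<lambda>s. f x s u v) has_real_derivative frechet_derivative (Fh f) (at ((x,y),(u,v))) ((0,1),(0,0))) (at y)"
    and "((\<lambda>s. f x y s v) has_real_derivative frechet_derivative (Fh f) (at ((x,y),(u,v))) ((0,0),(1,0))) (at u)"
    and "((\<lambda>s. f x y u s) has_real_derivative frechet_derivative (Fh f) (at ((x,y),(u,v))) ((0,0),(0,1))) (at v)"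
proof -
  have dif: "Fh f differentiable (at ((x,y),(u,v)))"
    using smooth_on_differentiable[OF sm[unfolded smooth4_Fh]] xy by simp
  show "((\<lambda>s. f s y u v) has_real_derivative frechet_derivative (Fh f) (at ((x,y),(u,v))) ((1,0),(0,0))) (at x)"
    using line_deriv[of "Fh f" "((0,y),(u,v))" x "((1,0),(0,0))"] dif by simp
  show "((\<lambda>s. f x s u v) has_real_derivative frechet_derivative (Fh f) (at ((x,y),(u,v))) ((0,1),(0,0))) (at y)"
    using line_deriv[of "Fh f" "((x,0),(u,v))" y "((0,1),(0,0))"] dif by simp
  show "((\<lambda>s. f x y s v) has_real_derivative frechet_derivative (Fh f) (at ((x,y),(u,v))) ((0,0),(1,0))) (at u)"
    using line_deriv[of "Fh f" "((x,y),(0,v))" u "((0,0),(1,0))"] dif by simp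
  show "((\<lambda>s. f x y u s) has_real_derivative frechet_derivative (Fh f) (at ((x,y),(u,v))) ((0,0),(0,1))) (at v)"
    using line_deriv[of "Fh f" "((x,y),(u,0))" v "((0,0),(0,1))"] dif by simp
qed

lemma d_eq:
  assumes U: "open U" and sm: "smooth4 U f" and xy: "(x,y) \<in> U"
  shows "d1 f x y u v = frechet_derivative (Fh f) (at ((x,y),(u,v))) ((1,0),(0,0))"
    and "d2 f x y u v = frechet_derivative (Fh f) (at ((x,y),(u,v))) ((0,1),(0,0))"
    and "d3 f x y u v = frechet_derivative (Fh f) (at ((x,y),(u,v))) ((0,0),(1,0))"
    and "d4 f x y u v = frechet_derivative (Fh f) (at ((x,y),(u,v))) ((0,0),(0,1))"
  using d_has[OF assms, where u=u and v=v] by (simp_all add: d1_def d2_def d3_def d4_def DERIV_imp_deriv)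

lemma d_has':
  assumes U: "open U" and sm: "smooth4 U f" and xy: "(x,y) \<in> U"
  shows "((\<lambda>s. f s y u v) has_real_derivative d1 f x y u v) (at x)"
    and "((\<lambda>s. f x s u v) has_real_derivative d2 f x y u v) (at y)"
    and "((\<lambda>s. f x y s v) has_real_derivative d3 f x y u v) (at u)"
    and "((\<lambda>s. f x y u s) has_real_derivative d4 f x y u v) (at v)"
  using d_has[OF assms, where u=u and v=v] d_eq[OF assms, where u=u and v=v] by simp_all

lemma smooth4_frechet_cong:
  assumes U: "open U" and sm: "smooth4 U f" and w: "\<And>x y u v. (x,y) \<in> U \<Longrightarrow> D f x y u v = frechet_derivative (Fh f) (at ((x,y),(u,v))) w"
  shows "smooth4 U (D f)"
  unfolding smooth4_Fh
proof (rule smooth_on_cong[OF _ _ smooth_on_frechet[OF sm[unfolded smooth4_Fh], of w]])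
  show "open (U \<times> (UNIV :: (real \<times> real) set))" using U by (simp add: open_Times)
  fix p :: "(real \<times> real) \<times> (real \<times> real)" assume p: "p \<in> U \<times> UNIV"
  obtain x y u v where pe: "p = ((x,y),(u,v))" using prod.collapse by metis
  show "frechet_derivative (Fh f) (at p) w = Fh (D f) p" using p w[of x y u v] pe by simp
qed

lemma smooth4_d:
  assumes U: "open U" and sm: "smooth4 U f"
  shows "smooth4 U (d1 f)" "smooth4 U (d2 f)" "smooth4 U (d3 f)" "smooth4 U (d4 f)"
  using smooth4_frechet_cong[OF U sm] d_eq[OF U sm] by blast+

lemma commute_generic:
  assumes U: "open U" and sm: "smooth4 U f" and xy: "(x,y) \<in> U"
    and Di: "\<And>g x y u v. smooth4 U g \<Longrightarrow> (x,y) \<in> U \<Longrightarrow> Di g x y u v = frechet_derivative (Fh g) (at ((x,y),(u,v))) wi"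
    and Dj: "\<And>g x y u v. smooth4 U g \<Longrightarrow> (x,y) \<in> U \<Longrightarrow> Dj g x y u v = frechet_derivative (Fh g) (at ((x,y),(u,v))) wj"
  shows "Di (Dj f) x y u v = Dj (Di f) x y u v"
proof -
  let ?P = "((x,y),(u,v))"
  have oS: "open (U \<times> (UNIV :: (real \<times> real) set))" using U by (simp add: open_Times)
  have PS: "?P \<in> U \<times> UNIV" using xy by simp
  have smF: "smooth_on (U \<times> UNIV) (Fh f)" using sm smooth4_Fh by blast
  have smj: "smooth4 U (Dj f)" using smooth4_frechet_cong[OF U sm] Dj[OF sm] by blast
  have smi: "smooth4 U (Di f)" using smooth4_frechet_cong[OF U sm] Di[OF sm] by blast
  have eqj: "Fh (Dj f) q = frechet_derivative (Fh f) (at q) wj" if "q \<in> U \<times> UNIV" for q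
  proof -
    obtain x y u v where pe: "q = ((x,y),(u,v))" using prod.collapse by metis
    show ?thesis using that Dj[OF sm, of x y u v] pe by simp
  qed
  have eqi: "Fh (Di f) q = frechet_derivative (Fh f) (at q) wi" if "q \<in> U \<times> UNIV" for q
  proof -
    obtain x y u v where pe: "q = ((x,y),(u,v))" using prod.collapse by metis
    show ?thesis using that Di[OF sm, of x y u v] pe by simp
  qed
  have "Di (Dj f) x y u v = frechet_derivative (Fh (Dj f)) (at ?P) wi" using Di[OF smj xy] .
  also have "frechet_derivative (Fh (Dj f)) (at ?P) = frechet_derivative (\<lambda>q. frechet_derivative (Fh f) (at q) wj) (at ?P)"
    by (rule frechet_derivative_transform_within_open[OF _ oS PS])
       (use smooth_on_differentiable[OF smj[unfolded smooth4_Fh] PS] eqj in auto)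
  also have "\<dots> wi = frechet_derivative (\<lambda>q. frechet_derivative (Fh f) (at q) wi) (at ?P) wj"
    by (rule clairaut[OF oS smF PS])
  also have "frechet_derivative (\<lambda>q. frechet_derivative (Fh f) (at q) wi) (at ?P) = frechet_derivative (Fh (Di f)) (at ?P)"
    by (rule frechet_derivative_transform_within_open[OF _ oS PS])
       (use smooth_on_differentiable[OF smooth_on_frechet[OF smF] PS] eqi in auto)
  also have "\<dots> wj = Dj (Di f) x y u v" using Dj[OF smi xy] by simp
  finally show ?thesis .
qed

lemma d_eqs:
  assumes U: "open U"
  shows "\<And>g x y u v. smooth4 U g \<Longrightarrow> (x,y) \<in> U \<Longrightarrow> d1 g x y u v = frechet_derivative (Fh g) (at ((x,y),(u,v))) ((1,0),(0,0))"
    and "\<And>g x y u v. smooth4 U g \<Longrightarrow> (x,y) \<in> U \<Longrightarrow> d2 g x y u v = frechet_derivative (Fh g) (at ((x,y),(u,v))) ((0,1),(0,0))"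
    and "\<And>g x y u v. smooth4 U g \<Longrightarrow> (x,y) \<in> U \<Longrightarrow> d3 g x y u v = frechet_derivative (Fh g) (at ((x,y),(u,v))) ((0,0),(1,0))"
    and "\<And>g x y u v. smooth4 U g \<Longrightarrow> (x,y) \<in> U \<Longrightarrow> d4 g x y u v = frechet_derivative (Fh g) (at ((x,y),(u,v))) ((0,0),(0,1))"
  using d_eq[OF U] by blast+

lemma commute:
  assumes U: "open U" and sm: "smooth4 U f" and xy: "(x,y) \<in> U"
  shows "d3 (d4 f) x y u v = d4 (d3 f) x y u v"
    and "d4 (d1 f) x y u v = d1 (d4 f) x y u v"
    and "d1 (d3 f) x y u v = d3 (d1 f) x y u v"
    and "d4 (d2 f) x y u v = d2 (d4 f) x y u v"
    and "d2 (d3 f) x y u v = d3 (d2 f) x y u v"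
    and "d1 (d4 f) x y u v = d4 (d1 f) x y u v"
    and "d2 (d4 f) x y u v = d4 (d2 f) x y u v"
    and "d3 (d1 f) x y u v = d1 (d3 f) x y u v"
    and "d3 (d2 f) x y u v = d2 (d3 f) x y u v"
    and "d4 (d3 f) x y u v = d3 (d4 f) x y u v"
  using commute_generic[OF U sm xy d_eqs(3)[OF U] d_eqs(4)[OF U]]
    commute_generic[OF U sm xy d_eqs(4)[OF U] d_eqs(1)[OF U]]
    commute_generic[OF U sm xy d_eqs(1)[OF U] d_eqs(3)[OF U]]
    commute_generic[OF U sm xy d_eqs(4)[OF U] d_eqs(2)[OF U]]
    commute_generic[OF U sm xy d_eqs(2)[OF U] d_eqs(3)[OF U]]
  by metis+

lemma cont4:
  assumes "smooth4 U g" "continuous_on T (\<lambda>t. ((X t, Y t), (Uu t, Vv t)))" "\<And>t. t \<in> T \<Longrightarrow> (X t, Y t) \<in> U"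
  shows "continuous_on T (\<lambda>t. g (X t) (Y t) (Uu t) (Vv t))"
proof -
  have "continuous_on T (\<lambda>t. Fh g ((X t, Y t), (Uu t, Vv t)))"
    by (rule smooth_comp_cont[OF smooth_on_continuous[OF assms(1)[unfolded smooth4_Fh]] assms(2)])
       (use assms(3) in auto)
  then show ?thesis by simp
qed

definition Pf :: "(real \<Rightarrow> real \<Rightarrow> real \<Rightarrow> real \<Rightarrow> real) \<Rightarrow> (real \<Rightarrow> real \<Rightarrow> real \<Rightarrow> real \<Rightarrow> real)
   \<Rightarrow> real \<Rightarrow> real \<Rightarrow> real \<Rightarrow> real \<Rightarrow> real" where
  "Pf f1 f2 x y u v = oint 0 u (\<lambda>\<nu>. f1 x y \<nu> v) + oint 0 v (\<lambda>\<sigma>. f2 x y 0 \<sigma>)"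

lemma kappa_Pf:
  "kappa_x Bxx Bxy = (\<lambda>x y u v. - Pf Bxx Bxy x y u v)"
  "kappa_y Bxy Byy = (\<lambda>x y u v. - Pf Bxy Byy x y u v)"
  by (intro ext; simp add: kappa_x_def kappa_y_def Pf_def)+

lemma cont_line:
  assumes "smooth4 U g" "(x,y) \<in> U"
  shows "continuous_on T (\<lambda>t. g x y t v)" "continuous_on T (\<lambda>t. g x y u t)"
  by (rule cont4[OF assms(1)]; (use assms(2) in \<open>auto intro!: continuous_intros\<close>))+

lemma Pf_d3:
  assumes U: "open U" and sm1: "smooth4 U f1" and xy: "(x,y) \<in> U"
  shows "((\<lambda>s. Pf f1 f2 x y s v) has_real_derivative f1 x y u v) (at u)"
proof -
  have "((\<lambda>s. oint 0 s (\<lambda>\<nu>. f1 x y \<nu> v) + oint 0 v (\<lambda>\<sigma>. f2 x y 0 \<sigma>)) has_real_derivative f1 x y u v + 0) (at u)"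
    by (rule DERIV_add[OF oint_deriv_upper_UNIV DERIV_const]) (rule cont_line[OF sm1 xy])
  then show ?thesis by (simp add: Pf_def)
qed

lemma Pf_d4:
  assumes U: "open U" and sm1: "smooth4 U f1" and sm2: "smooth4 U f2" and xy: "(x,y) \<in> U"
    and H: "\<And>u v. d4 f1 x y u v = d3 f2 x y u v"
  shows "((\<lambda>s. Pf f1 f2 x y u s) has_real_derivative f2 x y u v) (at v)"
proof -
  let ?seg = "{min 0 u..max 0 u}"
  have A: "((\<lambda>s. oint 0 u (\<lambda>\<nu>. f1 x y \<nu> s)) has_real_derivative oint 0 u (\<lambda>\<nu>. d4 f1 x y \<nu> v)) (at v)"
  proof (rule oint_leibniz[where f="\<lambda>s \<nu>. f1 x y \<nu> s" and fx="\<lambda>s \<nu>. d4 f1 x y \<nu> s" and r=1])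
    fix s \<nu> :: real
    show "((\<lambda>s. f1 x y \<nu> s) has_real_derivative d4 f1 x y \<nu> s) (at s)"
      by (rule d_has'(4)[OF U sm1 xy])
  next
    fix s :: real
    show "continuous_on ?seg (\<lambda>\<nu>. f1 x y \<nu> s)" by (rule cont_line[OF sm1 xy])
  next
    show "continuous_on (ball v 1 \<times> ?seg) (\<lambda>(s, \<nu>). d4 f1 x y \<nu> s)"
      by (simp add: case_prod_unfold, rule cont4[OF smooth4_d(4)[OF U sm1]]; (use xy in \<open>auto intro!: continuous_intros\<close>))
  qed simp
  have "oint 0 u (\<lambda>\<nu>. d4 f1 x y \<nu> v) = oint 0 u (\<lambda>\<nu>. d3 f2 x y \<nu> v)" using H by simp
  also have "\<dots> = f2 x y u v - f2 x y 0 v"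
    using oint_ftc[where G="\<lambda>\<nu>. f2 x y \<nu> v" and g="\<lambda>\<nu>. d3 f2 x y \<nu> v" and a=0 and b=u]
      d_has'(3)[OF U sm2 xy] by (simp add: has_field_derivative_at_within)
  finally have A': "((\<lambda>s. oint 0 u (\<lambda>\<nu>. f1 x y \<nu> s)) has_real_derivative f2 x y u v - f2 x y 0 v) (at v)"
    using A by simp
  have B: "((\<lambda>s. oint 0 s (\<lambda>\<sigma>. f2 x y 0 \<sigma>)) has_real_derivative f2 x y 0 v) (at v)"
    by (rule oint_deriv_upper_UNIV) (rule cont_line[OF sm2 xy])
  have "((\<lambda>s. oint 0 u (\<lambda>\<nu>. f1 x y \<nu> s) + oint 0 s (\<lambda>\<sigma>. f2 x y 0 \<sigma>)) has_real_derivative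
        (f2 x y u v - f2 x y 0 v) + f2 x y 0 v) (at v)"
    by (rule DERIV_add[OF A' B])
  then show ?thesis by (simp add: Pf_def)
qed

lemma ball_slices:
  assumes U: "open U" and xy: "(x,y) \<in> U"
  obtains r where "r > 0" "\<And>s. s \<in> ball x r \<Longrightarrow> (s,y) \<in> U" "\<And>s. s \<in> ball y r \<Longrightarrow> (x,s) \<in> U"
proof -
  obtain r where r: "r > 0" "ball (x,y) r \<subseteq> U" using U xy openE by blast
  have "(s,y) \<in> U" if "s \<in> ball x r" for s
    using that r by (auto simp: dist_Pair_Pair subset_eq)
  moreover have "(x,s) \<in> U" if "s \<in> ball y r" for s
    using that r by (auto simp: dist_Pair_Pair subset_eq)
  ultimately show ?thesis using that r by blast
qed

lemma Pf_d1:
  assumes U: "open U" and sm1: "smooth4 U f1" and sm2: "smooth4 U f2" and xy: "(x,y) \<in> U"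
  shows "((\<lambda>s. Pf f1 f2 s y u v) has_real_derivative
          oint 0 u (\<lambda>\<nu>. d1 f1 x y \<nu> v) + oint 0 v (\<lambda>\<sigma>. d1 f2 x y 0 \<sigma>)) (at x)"
proof -
  obtain r where r: "r > 0" "\<And>s. s \<in> ball x r \<Longrightarrow> (s,y) \<in> U" using ball_slices[OF U xy] by metis
  have A: "((\<lambda>s. oint 0 u (\<lambda>\<nu>. f1 s y \<nu> v)) has_real_derivative oint 0 u (\<lambda>\<nu>. d1 f1 x y \<nu> v)) (at x)"
  proof (rule oint_leibniz[where f="\<lambda>s \<nu>. f1 s y \<nu> v" and fx="\<lambda>s \<nu>. d1 f1 s y \<nu> v" and r=r])
    fix s \<nu> :: real assume "s \<in> ball x r"
    then show "((\<lambda>s. f1 s y \<nu> v) has_real_derivative d1 f1 s y \<nu> v) (at s)"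
      by (rule d_has'(1)[OF U sm1 r(2)])
  next
    fix s :: real assume "s \<in> ball x r"
    then show "continuous_on {min 0 u..max 0 u} (\<lambda>\<nu>. f1 s y \<nu> v)" by (rule cont_line[OF sm1 r(2)])
  next
    show "continuous_on (ball x r \<times> {min 0 u..max 0 u}) (\<lambda>(s, \<nu>). d1 f1 s y \<nu> v)"
      by (simp add: case_prod_unfold, rule cont4[OF smooth4_d(1)[OF U sm1]]; (use r in \<open>auto intro!: continuous_intros\<close>))
  qed (use r in simp)
  have B: "((\<lambda>s. oint 0 v (\<lambda>\<sigma>. f2 s y 0 \<sigma>)) has_real_derivative oint 0 v (\<lambda>\<sigma>. d1 f2 x y 0 \<sigma>)) (at x)"
  proof (rule oint_leibniz[where f="\<lambda>s \<sigma>. f2 s y 0 \<sigma>" and fx="\<lambda>s \<sigma>. d1 f2 s y 0 \<sigma>" and r=r])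
    fix s \<sigma> :: real assume "s \<in> ball x r"
    then show "((\<lambda>s. f2 s y 0 \<sigma>) has_real_derivative d1 f2 s y 0 \<sigma>) (at s)"
      by (rule d_has'(1)[OF U sm2 r(2)])
  next
    fix s :: real assume "s \<in> ball x r"
    then show "continuous_on {min 0 v..max 0 v} (\<lambda>\<sigma>. f2 s y 0 \<sigma>)" by (rule cont_line[OF sm2 r(2)])
  next
    show "continuous_on (ball x r \<times> {min 0 v..max 0 v}) (\<lambda>(s, \<sigma>). d1 f2 s y 0 \<sigma>)"
      by (simp add: case_prod_unfold, rule cont4[OF smooth4_d(1)[OF U sm2]]; (use r in \<open>auto intro!: continuous_intros\<close>))
  qed (use r in simp)
  show ?thesis using DERIV_add[OF A B] by (simp add: Pf_def)
qed

lemma Pf_d2: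
  assumes U: "open U" and sm1: "smooth4 U f1" and sm2: "smooth4 U f2" and xy: "(x,y) \<in> U"
  shows "((\<lambda>s. Pf f1 f2 x s u v) has_real_derivative
          oint 0 u (\<lambda>\<nu>. d2 f1 x y \<nu> v) + oint 0 v (\<lambda>\<sigma>. d2 f2 x y 0 \<sigma>)) (at y)"
proof -
  obtain r where r: "r > 0" "\<And>s. s \<in> ball y r \<Longrightarrow> (x,s) \<in> U" using ball_slices[OF U xy] by metis
  have A: "((\<lambda>s. oint 0 u (\<lambda>\<nu>. f1 x s \<nu> v)) has_real_derivative oint 0 u (\<lambda>\<nu>. d2 f1 x y \<nu> v)) (at y)"
  proof (rule oint_leibniz[where f="\<lambda>s \<nu>. f1 x s \<nu> v" and fx="\<lambda>s \<nu>. d2 f1 x s \<nu> v" and r=r])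
    fix s \<nu> :: real assume "s \<in> ball y r"
    then show "((\<lambda>s. f1 x s \<nu> v) has_real_derivative d2 f1 x s \<nu> v) (at s)"
      by (rule d_has'(2)[OF U sm1 r(2)])
  next
    fix s :: real assume "s \<in> ball y r"
    then show "continuous_on {min 0 u..max 0 u} (\<lambda>\<nu>. f1 x s \<nu> v)" by (rule cont_line[OF sm1 r(2)])
  next
    show "continuous_on (ball y r \<times> {min 0 u..max 0 u}) (\<lambda>(s, \<nu>). d2 f1 x s \<nu> v)"
      by (simp add: case_prod_unfold, rule cont4[OF smooth4_d(2)[OF U sm1]]; (use r in \<open>auto intro!: continuous_intros\<close>))
  qed (use r in simp)
  have B: "((\<lambda>s. oint 0 v (\<lambda>\<sigma>. f2 x s 0 \<sigma>)) has_real_derivative oint 0 v (\<lambda>\<sigma>. d2 f2 x y 0 \<sigma>)) (at y)"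
  proof (rule oint_leibniz[where f="\<lambda>s \<sigma>. f2 x s 0 \<sigma>" and fx="\<lambda>s \<sigma>. d2 f2 x s 0 \<sigma>" and r=r])
    fix s \<sigma> :: real assume "s \<in> ball y r"
    then show "((\<lambda>s. f2 x s 0 \<sigma>) has_real_derivative d2 f2 x s 0 \<sigma>) (at s)"
      by (rule d_has'(2)[OF U sm2 r(2)])
  next
    fix s :: real assume "s \<in> ball y r"
    then show "continuous_on {min 0 v..max 0 v} (\<lambda>\<sigma>. f2 x s 0 \<sigma>)" by (rule cont_line[OF sm2 r(2)])
  next
    show "continuous_on (ball y r \<times> {min 0 v..max 0 v}) (\<lambda>(s, \<sigma>). d2 f2 x s 0 \<sigma>)"
      by (simp add: case_prod_unfold, rule cont4[OF smooth4_d(2)[OF U sm2]]; (use r in \<open>auto intro!: continuous_intros\<close>))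
  qed (use r in simp)
  show ?thesis using DERIV_add[OF A B] by (simp add: Pf_def)
qed

lemma helm:
  assumes "helmholtz U Ax Ay Bxx Bxy Byy"
  shows "smooth4 U Ax" "smooth4 U Ay" "smooth4 U Bxx" "smooth4 U Bxy" "smooth4 U Byy"
    and "\<And>x y u v. (x,y) \<in> U \<Longrightarrow> d4 Bxx x y u v = d3 Bxy x y u v"
    and "\<And>x y u v. (x,y) \<in> U \<Longrightarrow> d4 Bxy x y u v = d3 Byy x y u v"
    and "\<And>x y u v. (x,y) \<in> U \<Longrightarrow> d3 Ax x y u v = u * d1 Bxx x y u v + v * d2 Bxx x y u v"
    and "\<And>x y u v. (x,y) \<in> U \<Longrightarrow> d4 Ay x y u v = u * d1 Byy x y u v + v * d2 Byy x y u v"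
    and "\<And>x y u v. (x,y) \<in> U \<Longrightarrow> d4 Ax x y u v + d3 Ay x y u v = (2 * u) * d1 Bxy x y u v + (2 * v) * d2 Bxy x y u v"
  using assms unfolding helmholtz_def by (auto simp: algebra_simps)

lemma arith1:
  fixes a c b y u v p q :: real
  assumes "a = u * p + b + v * q" "a + c = 2 * y + 2 * u * p + 2 * v * q"
  shows "a - c = 2 * (b - y)"
  using assms by (simp add: algebra_simps)

lemma arith2:
  fixes a c b y u v p q :: real
  assumes "c = y + u * p + v * q" "a + c = 2 * u * p + 2 * v * q + 2 * b"
  shows "a - c = 2 * (b - y)"
  using assms by (simp add: algebra_simps)

lemma Dderiv:
  assumes U: "open U" and lv: "helmholtz U Ax Ay Bxx Bxy Byy" and xy: "(x,y) \<in> U"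
  shows "d3 (d4 Ax) x y u v - d3 (d3 Ay) x y u v = 2 * (d2 Bxx x y u v - d1 Bxy x y u v)"
    and "d4 (d4 Ax) x y u v - d4 (d3 Ay) x y u v = 2 * (d2 Bxy x y u v - d1 Byy x y u v)"
proof -
  note sm = helm(1-5)[OF lv]
  note H = helm(6-10)[OF lv]
  obtain r where r: "r > 0" "\<And>s. s \<in> ball x r \<Longrightarrow> (s,y) \<in> U" "\<And>s. s \<in> ball y r \<Longrightarrow> (x,s) \<in> U"
    using ball_slices[OF U xy] by metis
  have ev1: "\<forall>\<^sub>F s in nhds x. (s, y) \<in> U"
    unfolding eventually_nhds by (rule exI[of _ "ball x r"]) (use r in auto)
  have ev2: "\<forall>\<^sub>F s in nhds y. (x, s) \<in> U"
    unfolding eventually_nhds by (rule exI[of _ "ball y r"]) (use r in auto)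
  have c1: "d1 (d4 Bxx) x y u v = d1 (d3 Bxy) x y u v"
    unfolding d1_def by (rule deriv_cong_ev[OF eventually_mono[OF ev1]]) (use H(1) in auto)
  have c2: "d2 (d4 Bxx) x y u v = d2 (d3 Bxy) x y u v"
    unfolding d2_def by (rule deriv_cong_ev[OF eventually_mono[OF ev2]]) (use H(1) in auto)
  have c3: "d1 (d4 Bxy) x y u v = d1 (d3 Byy) x y u v"
    unfolding d1_def by (rule deriv_cong_ev[OF eventually_mono[OF ev1]]) (use H(2) in auto)
  have c4: "d2 (d4 Bxy) x y u v = d2 (d3 Byy) x y u v"
    unfolding d2_def by (rule deriv_cong_ev[OF eventually_mono[OF ev2]]) (use H(2) in auto)
  have a: "d4 (d3 Ax) x y u v = u * d4 (d1 Bxx) x y u v + d2 Bxx x y u v + v * d4 (d2 Bxx) x y u v"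
  proof -
    have f: "(\<lambda>s. d3 Ax x y u s) = (\<lambda>s. u * d1 Bxx x y u s + s * d2 Bxx x y u s)"
      using H(3)[OF xy] by auto
    have "((\<lambda>s. u * d1 Bxx x y u s + s * d2 Bxx x y u s) has_real_derivative
           u * d4 (d1 Bxx) x y u v + (v * d4 (d2 Bxx) x y u v + 1 * d2 Bxx x y u v)) (at v)"
      by (rule DERIV_add[OF DERIV_cmult[OF d_has'(4)[OF U smooth4_d(1)[OF U sm(3)] xy]]
                           DERIV_mult'[OF DERIV_ident d_has'(4)[OF U smooth4_d(2)[OF U sm(3)] xy]]])
    then show ?thesis unfolding d4_def f by (simp add: DERIV_imp_deriv algebra_simps)
  qed
  have b: "d3 (d4 Ax) x y u v + d3 (d3 Ay) x y u v =
           2 * d1 Bxy x y u v + 2 * u * d3 (d1 Bxy) x y u v + 2 * v * d3 (d2 Bxy) x y u v"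
  proof -
    have L: "((\<lambda>s. d4 Ax x y s v + d3 Ay x y s v) has_real_derivative d3 (d4 Ax) x y u v + d3 (d3 Ay) x y u v) (at u)"
      by (rule DERIV_add[OF d_has'(3)[OF U smooth4_d(4)[OF U sm(1)] xy] d_has'(3)[OF U smooth4_d(3)[OF U sm(2)] xy]])
    have f: "(\<lambda>s. d4 Ax x y s v + d3 Ay x y s v) = (\<lambda>s. (2 * s) * d1 Bxy x y s v + (2 * v) * d2 Bxy x y s v)"
      using H(5)[OF xy] by auto
    have R: "((\<lambda>s. (2 * s) * d1 Bxy x y s v + (2 * v) * d2 Bxy x y s v) has_real_derivative
           (2 * u) * d3 (d1 Bxy) x y u v + 2 * 1 * d1 Bxy x y u v + (2 * v) * d3 (d2 Bxy) x y u v) (at u)"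
      by (rule DERIV_add[OF DERIV_mult'[OF DERIV_cmult[OF DERIV_ident] d_has'(3)[OF U smooth4_d(1)[OF U sm(4)] xy]]
                           DERIV_cmult[OF d_has'(3)[OF U smooth4_d(2)[OF U sm(4)] xy]]])
    show ?thesis using DERIV_unique[OF L R[folded f]] by (simp add: algebra_simps)
  qed
  have a': "d3 (d4 Ax) x y u v = u * d3 (d1 Bxy) x y u v + d2 Bxx x y u v + v * d3 (d2 Bxy) x y u v"
    using a c1 c2 commute(1)[OF U sm(1) xy] commute(2,4)[OF U sm(3) xy] commute(3,5)[OF U sm(4) xy] by simp
  show "d3 (d4 Ax) x y u v - d3 (d3 Ay) x y u v = 2 * (d2 Bxx x y u v - d1 Bxy x y u v)"
    by (rule arith1[OF a']) (use b in \<open>simp add: algebra_simps\<close>)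
  have a2: "d3 (d4 Ay) x y u v = d1 Byy x y u v + u * d3 (d1 Byy) x y u v + v * d3 (d2 Byy) x y u v"
  proof -
    have f: "(\<lambda>s. d4 Ay x y s v) = (\<lambda>s. s * d1 Byy x y s v + v * d2 Byy x y s v)"
      using H(4)[OF xy] by auto
    have "((\<lambda>s. s * d1 Byy x y s v + v * d2 Byy x y s v) has_real_derivative
           (u * d3 (d1 Byy) x y u v + 1 * d1 Byy x y u v) + v * d3 (d2 Byy) x y u v) (at u)"
      by (rule DERIV_add[OF DERIV_mult'[OF DERIV_ident d_has'(3)[OF U smooth4_d(1)[OF U sm(5)] xy]]
                           DERIV_cmult[OF d_has'(3)[OF U smooth4_d(2)[OF U sm(5)] xy]]])
    then show ?thesis unfolding d3_def f by (simp add: DERIV_imp_deriv algebra_simps)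
  qed
  have b2: "d4 (d4 Ax) x y u v + d4 (d3 Ay) x y u v =
           2 * u * d4 (d1 Bxy) x y u v + 2 * v * d4 (d2 Bxy) x y u v + 2 * d2 Bxy x y u v"
  proof -
    have L: "((\<lambda>s. d4 Ax x y u s + d3 Ay x y u s) has_real_derivative d4 (d4 Ax) x y u v + d4 (d3 Ay) x y u v) (at v)"
      by (rule DERIV_add[OF d_has'(4)[OF U smooth4_d(4)[OF U sm(1)] xy] d_has'(4)[OF U smooth4_d(3)[OF U sm(2)] xy]])
    have f: "(\<lambda>s. d4 Ax x y u s + d3 Ay x y u s) = (\<lambda>s. (2 * u) * d1 Bxy x y u s + (2 * s) * d2 Bxy x y u s)"
      using H(5)[OF xy] by auto
    have R: "((\<lambda>s. (2 * u) * d1 Bxy x y u s + (2 * s) * d2 Bxy x y u s) has_real_derivative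
           (2 * u) * d4 (d1 Bxy) x y u v + ((2 * v) * d4 (d2 Bxy) x y u v + 2 * 1 * d2 Bxy x y u v)) (at v)"
      by (rule DERIV_add[OF DERIV_cmult[OF d_has'(4)[OF U smooth4_d(1)[OF U sm(4)] xy]]
                           DERIV_mult'[OF DERIV_cmult[OF DERIV_ident] d_has'(4)[OF U smooth4_d(2)[OF U sm(4)] xy]]])
    show ?thesis using DERIV_unique[OF L R[folded f]] by (simp add: algebra_simps)
  qed
  have a2': "d4 (d3 Ay) x y u v = d1 Byy x y u v + u * d4 (d1 Bxy) x y u v + v * d4 (d2 Bxy) x y u v"
    using a2 c3[symmetric] c4[symmetric] commute(10)[OF U sm(2) xy] commute(6,7)[OF U sm(4) xy] commute(8,9)[OF U sm(5) xy] by simp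
  show "d4 (d4 Ax) x y u v - d4 (d3 Ay) x y u v = 2 * (d2 Bxy x y u v - d1 Byy x y u v)"
    by (rule arith2[OF a2']) (use b2 in \<open>simp add: algebra_simps\<close>)
qed

lemma part3:
  assumes U: "open U" and lv: "helmholtz U Ax Ay Bxx Bxy Byy" and xy: "(x,y) \<in> U"
  shows "d1 (kappa_y Bxy Byy) x y u v - d2 (kappa_x Bxx Bxy) x y u v = Dfun Ax Ay x y u v / 2 - omega_coef Ax Ay x y"
    and "- d3 (kappa_x Bxx Bxy) x y u v = Bxx x y u v"
    and "- d4 (kappa_x Bxx Bxy) x y u v = Bxy x y u v"
    and "- d3 (kappa_y Bxy Byy) x y u v = Bxy x y u v"
    and "- d4 (kappa_y Bxy Byy) x y u v = Byy x y u v"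
proof -
  note sm = helm(1-5)[OF lv]
  note H = helm(6-10)[OF lv]
  have "d3 (kappa_x Bxx Bxy) x y u v = deriv (\<lambda>s. - Pf Bxx Bxy x y s v) u" by (simp add: d3_def kappa_Pf)
  also have "\<dots> = - Bxx x y u v" by (rule DERIV_imp_deriv[OF DERIV_minus[OF Pf_d3[OF U sm(3) xy]]])
  finally show "- d3 (kappa_x Bxx Bxy) x y u v = Bxx x y u v" by simp
  have "d4 (kappa_x Bxx Bxy) x y u v = deriv (\<lambda>s. - Pf Bxx Bxy x y u s) v" by (simp add: d4_def kappa_Pf)
  also have "\<dots> = - Bxy x y u v" by (rule DERIV_imp_deriv[OF DERIV_minus[OF Pf_d4[OF U sm(3) sm(4) xy H(1)[OF xy]]]])
  finally show "- d4 (kappa_x Bxx Bxy) x y u v = Bxy x y u v" by simp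
  have "d3 (kappa_y Bxy Byy) x y u v = deriv (\<lambda>s. - Pf Bxy Byy x y s v) u" by (simp add: d3_def kappa_Pf)
  also have "\<dots> = - Bxy x y u v" by (rule DERIV_imp_deriv[OF DERIV_minus[OF Pf_d3[OF U sm(4) xy]]])
  finally show "- d3 (kappa_y Bxy Byy) x y u v = Bxy x y u v" by simp
  have "d4 (kappa_y Bxy Byy) x y u v = deriv (\<lambda>s. - Pf Bxy Byy x y u s) v" by (simp add: d4_def kappa_Pf)
  also have "\<dots> = - Byy x y u v" by (rule DERIV_imp_deriv[OF DERIV_minus[OF Pf_d4[OF U sm(4) sm(5) xy H(2)[OF xy]]]])
  finally show "- d4 (kappa_y Bxy Byy) x y u v = Byy x y u v" by simp
  have "d1 (kappa_y Bxy Byy) x y u v = deriv (\<lambda>s. - Pf Bxy Byy s y u v) x" by (simp add: d1_def kappa_Pf)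
  also have "\<dots> = - (oint 0 u (\<lambda>\<nu>. d1 Bxy x y \<nu> v) + oint 0 v (\<lambda>\<sigma>. d1 Byy x y 0 \<sigma>))"
    by (rule DERIV_imp_deriv[OF DERIV_minus[OF Pf_d1[OF U sm(4) sm(5) xy]]])
  finally have k1: "d1 (kappa_y Bxy Byy) x y u v = - (oint 0 u (\<lambda>\<nu>. d1 Bxy x y \<nu> v) + oint 0 v (\<lambda>\<sigma>. d1 Byy x y 0 \<sigma>))" .
  have "d2 (kappa_x Bxx Bxy) x y u v = deriv (\<lambda>s. - Pf Bxx Bxy x s u v) y" by (simp add: d2_def kappa_Pf)
  also have "\<dots> = - (oint 0 u (\<lambda>\<nu>. d2 Bxx x y \<nu> v) + oint 0 v (\<lambda>\<sigma>. d2 Bxy x y 0 \<sigma>))"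
    by (rule DERIV_imp_deriv[OF DERIV_minus[OF Pf_d2[OF U sm(3) sm(4) xy]]])
  finally have k2: "d2 (kappa_x Bxx Bxy) x y u v = - (oint 0 u (\<lambda>\<nu>. d2 Bxx x y \<nu> v) + oint 0 v (\<lambda>\<sigma>. d2 Bxy x y 0 \<sigma>))" .
  have Df: "Dfun Ax Ay x y a b = d4 Ax x y a b - d3 Ay x y a b" for a b by (simp add: Dfun_def)
  have I1: "oint 0 u (\<lambda>\<nu>. d2 Bxx x y \<nu> v) - oint 0 u (\<lambda>\<nu>. d1 Bxy x y \<nu> v)
      = Dfun Ax Ay x y u v / 2 - Dfun Ax Ay x y 0 v / 2"
  proof -
    have "oint 0 u (\<lambda>\<nu>. d2 Bxx x y \<nu> v) - oint 0 u (\<lambda>\<nu>. d1 Bxy x y \<nu> v)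
        = oint 0 u (\<lambda>\<nu>. d2 Bxx x y \<nu> v - d1 Bxy x y \<nu> v)"
      by (rule oint_diff[symmetric]; rule cont_line[OF smooth4_d(2)[OF U sm(3)] xy] cont_line[OF smooth4_d(1)[OF U sm(4)] xy])
    also have "\<dots> = oint 0 u (\<lambda>\<nu>. (d3 (d4 Ax) x y \<nu> v - d3 (d3 Ay) x y \<nu> v) / 2)"
      unfolding Dderiv(1)[OF U lv xy] by (simp add: diff_divide_distrib)
    also have "\<dots> = (\<lambda>\<nu>. (d4 Ax x y \<nu> v - d3 Ay x y \<nu> v) / 2) u - (\<lambda>\<nu>. (d4 Ax x y \<nu> v - d3 Ay x y \<nu> v) / 2) 0"
    proof (rule oint_ftc)
      fix t
      show "((\<lambda>\<nu>. (d4 Ax x y \<nu> v - d3 Ay x y \<nu> v) / 2) has_real_derivative (d3 (d4 Ax) x y t v - d3 (d3 Ay) x y t v) / 2)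
              (at t within {min 0 u..max 0 u})"
        by (rule has_field_derivative_at_within, rule DERIV_cdivide, rule DERIV_diff)
           (rule d_has'(3)[OF U smooth4_d(4)[OF U sm(1)] xy], rule d_has'(3)[OF U smooth4_d(3)[OF U sm(2)] xy])
    qed
    finally show ?thesis by (simp add: Df diff_divide_distrib)
  qed
  have I2: "oint 0 v (\<lambda>\<sigma>. d2 Bxy x y 0 \<sigma>) - oint 0 v (\<lambda>\<sigma>. d1 Byy x y 0 \<sigma>)
      = Dfun Ax Ay x y 0 v / 2 - Dfun Ax Ay x y 0 0 / 2"
  proof -
    have "oint 0 v (\<lambda>\<sigma>. d2 Bxy x y 0 \<sigma>) - oint 0 v (\<lambda>\<sigma>. d1 Byy x y 0 \<sigma>)
        = oint 0 v (\<lambda>\<sigma>. d2 Bxy x y 0 \<sigma> - d1 Byy x y 0 \<sigma>)"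
      by (rule oint_diff[symmetric]; rule cont_line[OF smooth4_d(2)[OF U sm(4)] xy] cont_line[OF smooth4_d(1)[OF U sm(5)] xy])
    also have "\<dots> = oint 0 v (\<lambda>\<sigma>. (d4 (d4 Ax) x y 0 \<sigma> - d4 (d3 Ay) x y 0 \<sigma>) / 2)"
      unfolding Dderiv(2)[OF U lv xy] by (simp add: diff_divide_distrib)
    also have "\<dots> = (\<lambda>\<sigma>. (d4 Ax x y 0 \<sigma> - d3 Ay x y 0 \<sigma>) / 2) v - (\<lambda>\<sigma>. (d4 Ax x y 0 \<sigma> - d3 Ay x y 0 \<sigma>) / 2) 0"
    proof (rule oint_ftc)
      fix t
      show "((\<lambda>\<sigma>. (d4 Ax x y 0 \<sigma> - d3 Ay x y 0 \<sigma>) / 2) has_real_derivative (d4 (d4 Ax) x y 0 t - d4 (d3 Ay) x y 0 t) / 2)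
              (at t within {min 0 v..max 0 v})"
        by (rule has_field_derivative_at_within, rule DERIV_cdivide, rule DERIV_diff)
           (rule d_has'(4)[OF U smooth4_d(4)[OF U sm(1)] xy], rule d_has'(4)[OF U smooth4_d(3)[OF U sm(2)] xy])
    qed
    finally show ?thesis by (simp add: Df diff_divide_distrib)
  qed
  show "d1 (kappa_y Bxy Byy) x y u v - d2 (kappa_x Bxx Bxy) x y u v = Dfun Ax Ay x y u v / 2 - omega_coef Ax Ay x y"
    using I1 I2 unfolding k1 k2 omega_coef_def by simp
qed

lemma Pf_joint:
  assumes U: "open U" and sm1: "smooth4 U f1" and sm2: "smooth4 U f2" and xy: "(x,y) \<in> U"
    and H: "\<And>u v. d4 f1 x y u v = d3 f2 x y u v"
  shows "((\<lambda>z. Pf f1 f2 x y (fst z) (snd z)) has_derivative (\<lambda>h. fst h * f1 x y u v + snd h * f2 x y u v)) (at (u,v))"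
proof -
  have 1: "((\<lambda>(a,b). Pf f1 f2 x y a b) has_derivative
      (\<lambda>(tx,ty). (*) (f1 x y u v) tx + blinfun_apply (blinfun_mult_right (f2 x y u v)) ty)) (at (u,v) within UNIV \<times> UNIV)"
  proof (rule has_derivative_partialsI[where f="\<lambda>a b. Pf f1 f2 x y a b" and fy="\<lambda>a b. blinfun_mult_right (f2 x y a b)"])
    show "((\<lambda>a. Pf f1 f2 x y a v) has_derivative (*) (f1 x y u v)) (at u within UNIV)"
      using Pf_d3[OF U sm1 xy, of f2 v u] by (simp add: has_field_derivative_def)
  next
    fix a b :: real
    show "((\<lambda>b. Pf f1 f2 x y a b) has_derivative blinfun_apply (blinfun_mult_right (f2 x y a b))) (at b within UNIV)"
      using Pf_d4[OF U sm1 sm2 xy H, of a b] has_field_derivative_eq_has_derivative_blinfun by blast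
  next
    have c: "continuous_on UNIV (\<lambda>z::real\<times>real. f2 x y (fst z) (snd z))"
      by (rule cont4[OF sm2]) (use xy in \<open>auto intro!: continuous_intros\<close>)
    have "continuous_on UNIV (\<lambda>z::real\<times>real. blinfun_mult_right (f2 x y (fst z) (snd z)))"
      using c by (intro continuous_intros)
    then have "continuous (at (u,v)) (\<lambda>z::real\<times>real. blinfun_mult_right (f2 x y (fst z) (snd z)))"
      by (simp add: continuous_on_eq_continuous_at)
    then show "continuous (at (u, v) within UNIV \<times> UNIV) (\<lambda>(a, b). blinfun_mult_right (f2 x y a b))"
      by (simp add: case_prod_unfold)
  qed auto
  have e1: "(\<lambda>(a,b). Pf f1 f2 x y a b) = (\<lambda>z. Pf f1 f2 x y (fst z) (snd z))" by (simp add: case_prod_unfold)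
  have e2: "(\<lambda>(tx,ty). (*) (f1 x y u v) tx + blinfun_apply (blinfun_mult_right (f2 x y u v)) ty)
           = (\<lambda>h. fst h * f1 x y u v + snd h * f2 x y u v)"
    by (auto simp: case_prod_unfold mult.commute)
  show ?thesis using 1 unfolding e1 e2 by simp
qed

lemma Pf_line:
  assumes U: "open U" and sm1: "smooth4 U f1" and sm2: "smooth4 U f2" and xy: "(x,y) \<in> U"
    and H: "\<And>u v. d4 f1 x y u v = d3 f2 x y u v"
  shows "((\<lambda>s. Pf f1 f2 x y (\<alpha>1 * s + c1) (\<alpha>2 * s + c2)) has_real_derivative
           \<alpha>1 * f1 x y (\<alpha>1 * s0 + c1) (\<alpha>2 * s0 + c2) + \<alpha>2 * f2 x y (\<alpha>1 * s0 + c1) (\<alpha>2 * s0 + c2)) (at s0)"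
proof -
  let ?u = "\<alpha>1 * s0 + c1" and ?v = "\<alpha>2 * s0 + c2"
  have J: "((\<lambda>z. Pf f1 f2 x y (fst z) (snd z)) has_derivative (\<lambda>h. fst h * f1 x y ?u ?v + snd h * f2 x y ?u ?v)) (at (?u,?v))"
    by (rule Pf_joint[OF U sm1 sm2 xy H])
  have L: "((\<lambda>s. (\<alpha>1 * s + c1, \<alpha>2 * s + c2)) has_derivative (\<lambda>h. (\<alpha>1 * h, \<alpha>2 * h))) (at s0)"
    by (auto intro!: derivative_eq_intros)
  have "(((\<lambda>z. Pf f1 f2 x y (fst z) (snd z)) \<circ> (\<lambda>s. (\<alpha>1 * s + c1, \<alpha>2 * s + c2))) has_derivative
        ((\<lambda>h. fst h * f1 x y ?u ?v + snd h * f2 x y ?u ?v) \<circ> (\<lambda>h. (\<alpha>1 * h, \<alpha>2 * h)))) (at s0)"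
    by (rule diff_chain_at[OF L J])
  moreover have "((\<lambda>h. fst h * f1 x y ?u ?v + snd h * f2 x y ?u ?v) \<circ> (\<lambda>h. (\<alpha>1 * h, \<alpha>2 * h)))
      = (*) (\<alpha>1 * f1 x y ?u ?v + \<alpha>2 * f2 x y ?u ?v)"
    by (auto simp: algebra_simps)
  ultimately show ?thesis by (simp add: has_field_derivative_def o_def)
qed

lemma Pf_00[simp]: "Pf f1 f2 x y 0 0 = 0" by (simp add: Pf_def)

lemma kappa_generic:
  assumes U: "open U" and V: "open V"
    and smg1: "smooth4 U g1" and smg2: "smooth4 U g2" and xy: "(x,y) \<in> U"
    and Hg: "\<And>u v. d4 g1 x y u v = d3 g2 x y u v"
    and smB1: "smooth4 V B1" and smB2: "smooth4 V B2" and smB3: "smooth4 V B3" and PV: "(P1,P2) \<in> V"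
    and HB1: "\<And>u v. d4 B1 P1 P2 u v = d3 B2 P1 P2 u v" and HB2: "\<And>u v. d4 B2 P1 P2 u v = d3 B3 P1 P2 u v"
    and TBa: "\<And>a b. g1 x y a b =
        ca * (ma * B1 P1 P2 (ma * a + mb * b) (mc * a + md * b) + mc * B2 P1 P2 (ma * a + mb * b) (mc * a + md * b))
      + cb * (ma * B2 P1 P2 (ma * a + mb * b) (mc * a + md * b) + mc * B3 P1 P2 (ma * a + mb * b) (mc * a + md * b))"
    and TBb: "\<And>a b. g2 x y a b =
        ca * (mb * B1 P1 P2 (ma * a + mb * b) (mc * a + md * b) + md * B2 P1 P2 (ma * a + mb * b) (mc * a + md * b))
      + cb * (mb * B2 P1 P2 (ma * a + mb * b) (mc * a + md * b) + md * B3 P1 P2 (ma * a + mb * b) (mc * a + md * b))"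
  shows "- Pf g1 g2 x y a b = (- Pf B1 B2 P1 P2 (ma * a + mb * b) (mc * a + md * b)) * ca
                            + (- Pf B2 B3 P1 P2 (ma * a + mb * b) (mc * a + md * b)) * cb"
proof -
  define K where "K a b = - Pf g1 g2 x y a b - ((- Pf B1 B2 P1 P2 (ma * a + mb * b) (mc * a + md * b)) * ca
                            + (- Pf B2 B3 P1 P2 (ma * a + mb * b) (mc * a + md * b)) * cb)" for a b
  have da: "((\<lambda>s. K s b) has_real_derivative 0) (at s)" for s b
  proof -
    have "((\<lambda>s. K s b) has_real_derivative
       - g1 x y s b - ((- (ma * B1 P1 P2 (ma * s + mb * b) (mc * s + md * b) + mc * B2 P1 P2 (ma * s + mb * b) (mc * s + md * b))) * ca
                     + (- (ma * B2 P1 P2 (ma * s + mb * b) (mc * s + md * b) + mc * B3 P1 P2 (ma * s + mb * b) (mc * s + md * b))) * cb)) (at s)"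
      unfolding K_def
      by (rule DERIV_diff[OF DERIV_minus[OF Pf_d3[OF U smg1 xy]]
               DERIV_add[OF DERIV_cmult_right[OF DERIV_minus[OF Pf_line[OF V smB1 smB2 PV HB1]]]
                            DERIV_cmult_right[OF DERIV_minus[OF Pf_line[OF V smB2 smB3 PV HB2]]]]])
    then show ?thesis using TBa[of s b] by (simp add: algebra_simps)
  qed
  have db: "((\<lambda>s. K a s) has_real_derivative 0) (at s)" for a s
  proof -
    have Keq: "(\<lambda>s. K a s) = (\<lambda>s. - Pf g1 g2 x y a s - ((- Pf B1 B2 P1 P2 (mb * s + ma * a) (md * s + mc * a)) * ca
                            + (- Pf B2 B3 P1 P2 (mb * s + ma * a) (md * s + mc * a)) * cb))"
      by (simp add: K_def add.commute)
    have "((\<lambda>s. K a s) has_real_derivative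
       - g2 x y a s - ((- (mb * B1 P1 P2 (mb * s + ma * a) (md * s + mc * a) + md * B2 P1 P2 (mb * s + ma * a) (md * s + mc * a))) * ca
                     + (- (mb * B2 P1 P2 (mb * s + ma * a) (md * s + mc * a) + md * B3 P1 P2 (mb * s + ma * a) (md * s + mc * a))) * cb)) (at s)"
      unfolding Keq
      by (rule DERIV_diff[OF DERIV_minus[OF Pf_d4[OF U smg1 smg2 xy Hg]]
               DERIV_add[OF DERIV_cmult_right[OF DERIV_minus[OF Pf_line[OF V smB1 smB2 PV HB1]]]
                            DERIV_cmult_right[OF DERIV_minus[OF Pf_line[OF V smB2 smB3 PV HB2]]]]])
    moreover have "mb * s + ma * a = ma * a + mb * s" "md * s + mc * a = mc * a + md * s" by simp_all
    ultimately show ?thesis using TBb[of a s] by (simp add: algebra_simps)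
  qed
  have "K a b = K 0 b" using DERIV_isconst_all[of "\<lambda>s. K s b"] da by blast
  also have "\<dots> = K 0 0" using DERIV_isconst_all[of "\<lambda>s. K 0 s"] db by blast
  also have "\<dots> = 0" by (simp add: K_def)
  finally show ?thesis unfolding K_def by simp
qed

lemma smooth_line0:
  assumes U: "open U" and sm: "smooth4 U f" and xy: "(x,y) \<in> U"
  shows "((\<lambda>s. f x y (\<alpha> * s) (\<beta> * s)) has_real_derivative \<alpha> * d3 f x y 0 0 + \<beta> * d4 f x y 0 0) (at 0)"
proof -
  let ?p = "((x,y),(0::real,0::real))"
  let ?F' = "frechet_derivative (Fh f) (at ?p)"
  have dif: "Fh f differentiable (at ?p)"
    using smooth_on_differentiable[OF sm[unfolded smooth4_Fh]] xy by simp
  have 1: "((\<lambda>s. Fh f (?p + s *\<^sub>R ((0,0),(\<alpha>,\<beta>)))) has_real_derivative ?F' ((0,0),(\<alpha>,\<beta>))) (at 0)"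
    using line_deriv[of "Fh f" ?p 0 "((0,0),(\<alpha>,\<beta>))"] dif by simp
  have 2: "(\<lambda>s. Fh f (?p + s *\<^sub>R ((0,0),(\<alpha>,\<beta>)))) = (\<lambda>s. f x y (\<alpha> * s) (\<beta> * s))"
    by (simp add: mult.commute)
  have lin: "linear ?F'" using dif by (rule linear_frechet_derivative)
  have 3: "?F' ((0,0),(\<alpha>,\<beta>)) = \<alpha> * ?F' ((0,0),(1,0)) + \<beta> * ?F' ((0,0),(0,1))"
  proof -
    have "?F' ((0,0),(\<alpha>,\<beta>)) = ?F' (\<alpha> *\<^sub>R ((0,0),(1,0)) + \<beta> *\<^sub>R ((0,0),(0,1)))" by simp
    also have "\<dots> = \<alpha> * ?F' ((0,0),(1,0)) + \<beta> * ?F' ((0,0),(0,1))"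
      by (simp only: linear_add[OF lin] linear_cmul[OF lin] real_scaleR_def)
    finally show ?thesis .
  qed
  show ?thesis using 1 unfolding 2 3 d_eq(3,4)[OF U sm xy, symmetric] .
qed

lemma Aslice:
  assumes V: "open V" and PV: "(P1,P2) \<in> V"
    and s1: "smooth4 V A1" and s2: "smooth4 V A2" and s3: "smooth4 V B1" and s4: "smooth4 V B2" and s5: "smooth4 V B3"
  shows "((\<lambda>s. (A1 P1 P2 (\<alpha> * s) (\<beta> * s) + B1 P1 P2 (\<alpha> * s) (\<beta> * s) * (k1 * s * s) + B2 P1 P2 (\<alpha> * s) (\<beta> * s) * (k2 * s * s)) * m1
             + (A2 P1 P2 (\<alpha> * s) (\<beta> * s) + B2 P1 P2 (\<alpha> * s) (\<beta> * s) * (k1 * s * s) + B3 P1 P2 (\<alpha> * s) (\<beta> * s) * (k2 * s * s)) * m2)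
         has_real_derivative (\<alpha> * d3 A1 P1 P2 0 0 + \<beta> * d4 A1 P1 P2 0 0) * m1 + (\<alpha> * d3 A2 P1 P2 0 0 + \<beta> * d4 A2 P1 P2 0 0) * m2) (at 0)"
proof -
  have q: "((\<lambda>s. k * s * s) has_real_derivative k * 0 * 1 + k * 1 * 0) (at 0)" for k :: real
    by (rule DERIV_mult'[OF DERIV_cmult[OF DERIV_ident] DERIV_ident])
  note l1 = smooth_line0[OF V s1 PV, of \<alpha> \<beta>] and l2 = smooth_line0[OF V s2 PV, of \<alpha> \<beta>]
   and l3 = smooth_line0[OF V s3 PV, of \<alpha> \<beta>] and l4 = smooth_line0[OF V s4 PV, of \<alpha> \<beta>]
   and l5 = smooth_line0[OF V s5 PV, of \<alpha> \<beta>]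
  have "((\<lambda>s. (A1 P1 P2 (\<alpha> * s) (\<beta> * s) + B1 P1 P2 (\<alpha> * s) (\<beta> * s) * (k1 * s * s) + B2 P1 P2 (\<alpha> * s) (\<beta> * s) * (k2 * s * s)) * m1
             + (A2 P1 P2 (\<alpha> * s) (\<beta> * s) + B2 P1 P2 (\<alpha> * s) (\<beta> * s) * (k1 * s * s) + B3 P1 P2 (\<alpha> * s) (\<beta> * s) * (k2 * s * s)) * m2)
         has_real_derivative
          ((\<alpha> * d3 A1 P1 P2 0 0 + \<beta> * d4 A1 P1 P2 0 0)
            + (B1 P1 P2 (\<alpha> * 0) (\<beta> * 0) * (k1 * 0 * 1 + k1 * 1 * 0) + (\<alpha> * d3 B1 P1 P2 0 0 + \<beta> * d4 B1 P1 P2 0 0) * (k1 * 0 * 0))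
            + (B2 P1 P2 (\<alpha> * 0) (\<beta> * 0) * (k2 * 0 * 1 + k2 * 1 * 0) + (\<alpha> * d3 B2 P1 P2 0 0 + \<beta> * d4 B2 P1 P2 0 0) * (k2 * 0 * 0))) * m1
        + ((\<alpha> * d3 A2 P1 P2 0 0 + \<beta> * d4 A2 P1 P2 0 0)
            + (B2 P1 P2 (\<alpha> * 0) (\<beta> * 0) * (k1 * 0 * 1 + k1 * 1 * 0) + (\<alpha> * d3 B2 P1 P2 0 0 + \<beta> * d4 B2 P1 P2 0 0) * (k1 * 0 * 0))
            + (B3 P1 P2 (\<alpha> * 0) (\<beta> * 0) * (k2 * 0 * 1 + k2 * 1 * 0) + (\<alpha> * d3 B3 P1 P2 0 0 + \<beta> * d4 B3 P1 P2 0 0) * (k2 * 0 * 0))) * m2) (at 0)"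
    by (rule DERIV_add DERIV_cmult_right DERIV_mult' l1 l2 l3 l4 l5 q)+
  then show ?thesis by simp
qed

theorem theorem3p4:
  fixes U V :: "(real \<times> real) set"
    and p1 p2 q1 q2 :: "real \<Rightarrow> real \<Rightarrow> real"
    and Ax Ay Bxx Bxy Byy Ax' Ay' Bxx' Bxy' Byy' :: "real \<Rightarrow> real \<Rightarrow> real \<Rightarrow> real \<Rightarrow> real"
  assumes chart_change: "diffeo2 U V p1 p2 q1 q2"
    and lv: "helmholtz U Ax Ay Bxx Bxy Byy"
    and lv': "helmholtz V Ax' Ay' Bxx' Bxy' Byy'"
    and eps_transf: "\<And>x y u v a b. (x, y) \<in> U \<Longrightarrow>
        eps_x Ax Bxx Bxy x y u v a b =
          eps_x Ax' Bxx' Bxy' (p1 x y) (p2 x y) (vel p1 x y u v) (vel p2 x y u v)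
                (acc p1 x y u v a b) (acc p2 x y u v a b) * px p1 x y
        + eps_y Ay' Bxy' Byy' (p1 x y) (p2 x y) (vel p1 x y u v) (vel p2 x y u v)
                (acc p1 x y u v a b) (acc p2 x y u v a b) * px p2 x y
      \<and> eps_y Ay Bxy Byy x y u v a b =
          eps_x Ax' Bxx' Bxy' (p1 x y) (p2 x y) (vel p1 x y u v) (vel p2 x y u v)
                (acc p1 x y u v a b) (acc p2 x y u v a b) * py p1 x y
        + eps_y Ay' Bxy' Byy' (p1 x y) (p2 x y) (vel p1 x y u v) (vel p2 x y u v)
                (acc p1 x y u v a b) (acc p2 x y u v a b) * py p2 x y"
  shows
    "(\<forall>x y. (x, y) \<in> U \<longrightarrow>
        omega_coef Ax Ay x y =
          omega_coef Ax' Ay' (p1 x y) (p2 x y) * (px p1 x y * py p2 x y - py p1 x y * px p2 x y))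
   \<and> (\<forall>x y u v. (x, y) \<in> U \<longrightarrow>
        kappa_x Bxx Bxy x y u v =
          kappa_x Bxx' Bxy' (p1 x y) (p2 x y) (vel p1 x y u v) (vel p2 x y u v) * px p1 x y
        + kappa_y Bxy' Byy' (p1 x y) (p2 x y) (vel p1 x y u v) (vel p2 x y u v) * px p2 x y
      \<and> kappa_y Bxy Byy x y u v =
          kappa_x Bxx' Bxy' (p1 x y) (p2 x y) (vel p1 x y u v) (vel p2 x y u v) * py p1 x y
        + kappa_y Bxy' Byy' (p1 x y) (p2 x y) (vel p1 x y u v) (vel p2 x y u v) * py p2 x y)
   \<and> (\<forall>x y u v. (x, y) \<in> U \<longrightarrow>
        d1 (kappa_y Bxy Byy) x y u v - d2 (kappa_x Bxx Bxy) x y u v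
          = Dfun Ax Ay x y u v / 2 - omega_coef Ax Ay x y
      \<and> - d3 (kappa_x Bxx Bxy) x y u v = Bxx x y u v
      \<and> - d4 (kappa_x Bxx Bxy) x y u v = Bxy x y u v
      \<and> - d3 (kappa_y Bxy Byy) x y u v = Bxy x y u v
      \<and> - d4 (kappa_y Bxy Byy) x y u v = Byy x y u v)"
proof -
  have U: "open U" and V: "open V" and mapV: "\<And>x y. (x,y) \<in> U \<Longrightarrow> (p1 x y, p2 x y) \<in> V"
    using chart_change unfolding diffeo2_def by auto
  note sm = helm(1-5)[OF lv]
  note Hh = helm(6-10)[OF lv]
  note sm' = helm(1-5)[OF lv']
  note Hh' = helm(6-10)[OF lv']
  have part1: "\<forall>x y. (x, y) \<in> U \<longrightarrow>
        omega_coef Ax Ay x y =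
          omega_coef Ax' Ay' (p1 x y) (p2 x y) * (px p1 x y * py p2 x y - py p1 x y * px p2 x y)"
  proof (intro allI impI)
    fix x y assume xy: "(x,y) \<in> U"
    have PV: "(p1 x y, p2 x y) \<in> V" using mapV[OF xy] .
    have eqA: "(\<lambda>s. Ax x y 0 s) = (\<lambda>s.
       (Ax' (p1 x y) (p2 x y) (py p1 x y * s) (py p2 x y * s)
         + Bxx' (p1 x y) (p2 x y) (py p1 x y * s) (py p2 x y * s) * (py (py p1) x y * s * s)
         + Bxy' (p1 x y) (p2 x y) (py p1 x y * s) (py p2 x y * s) * (py (py p2) x y * s * s)) * px p1 x y
     + (Ay' (p1 x y) (p2 x y) (py p1 x y * s) (py p2 x y * s)
         + Bxy' (p1 x y) (p2 x y) (py p1 x y * s) (py p2 x y * s) * (py (py p1) x y * s * s)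
         + Byy' (p1 x y) (p2 x y) (py p1 x y * s) (py p2 x y * s) * (py (py p2) x y * s * s)) * px p2 x y)"
    proof
      fix s
      show "Ax x y 0 s = (Ax' (p1 x y) (p2 x y) (py p1 x y * s) (py p2 x y * s)
         + Bxx' (p1 x y) (p2 x y) (py p1 x y * s) (py p2 x y * s) * (py (py p1) x y * s * s)
         + Bxy' (p1 x y) (p2 x y) (py p1 x y * s) (py p2 x y * s) * (py (py p2) x y * s * s)) * px p1 x y
     + (Ay' (p1 x y) (p2 x y) (py p1 x y * s) (py p2 x y * s)
         + Bxy' (p1 x y) (p2 x y) (py p1 x y * s) (py p2 x y * s) * (py (py p1) x y * s * s)
         + Byy' (p1 x y) (p2 x y) (py p1 x y * s) (py p2 x y * s) * (py (py p2) x y * s * s)) * px p2 x y"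
        using eps_transf[OF xy, of 0 s 0 0] by (simp add: eps_x_def eps_y_def vel_def acc_def mult.assoc)
    qed
    have eqB: "(\<lambda>s. Ay x y s 0) = (\<lambda>s.
       (Ax' (p1 x y) (p2 x y) (px p1 x y * s) (px p2 x y * s)
         + Bxx' (p1 x y) (p2 x y) (px p1 x y * s) (px p2 x y * s) * (px (px p1) x y * s * s)
         + Bxy' (p1 x y) (p2 x y) (px p1 x y * s) (px p2 x y * s) * (px (px p2) x y * s * s)) * py p1 x y
     + (Ay' (p1 x y) (p2 x y) (px p1 x y * s) (px p2 x y * s)
         + Bxy' (p1 x y) (p2 x y) (px p1 x y * s) (px p2 x y * s) * (px (px p1) x y * s * s)
         + Byy' (p1 x y) (p2 x y) (px p1 x y * s) (px p2 x y * s) * (px (px p2) x y * s * s)) * py p2 x y)"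
    proof
      fix s
      show "Ay x y s 0 = (Ax' (p1 x y) (p2 x y) (px p1 x y * s) (px p2 x y * s)
         + Bxx' (p1 x y) (p2 x y) (px p1 x y * s) (px p2 x y * s) * (px (px p1) x y * s * s)
         + Bxy' (p1 x y) (p2 x y) (px p1 x y * s) (px p2 x y * s) * (px (px p2) x y * s * s)) * py p1 x y
     + (Ay' (p1 x y) (p2 x y) (px p1 x y * s) (px p2 x y * s)
         + Bxy' (p1 x y) (p2 x y) (px p1 x y * s) (px p2 x y * s) * (px (px p1) x y * s * s)
         + Byy' (p1 x y) (p2 x y) (px p1 x y * s) (px p2 x y * s) * (px (px p2) x y * s * s)) * py p2 x y"
        using eps_transf[OF xy, of s 0 0 0] by (simp add: eps_x_def eps_y_def vel_def acc_def mult.assoc)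
    qed
    have dA: "d4 Ax x y 0 0 = (py p1 x y * d3 Ax' (p1 x y) (p2 x y) 0 0 + py p2 x y * d4 Ax' (p1 x y) (p2 x y) 0 0) * px p1 x y
        + (py p1 x y * d3 Ay' (p1 x y) (p2 x y) 0 0 + py p2 x y * d4 Ay' (p1 x y) (p2 x y) 0 0) * px p2 x y"
      unfolding d4_def[of Ax] eqA by (rule DERIV_imp_deriv[OF Aslice[OF V PV sm'(1) sm'(2) sm'(3) sm'(4) sm'(5)]])
    have dB: "d3 Ay x y 0 0 = (px p1 x y * d3 Ax' (p1 x y) (p2 x y) 0 0 + px p2 x y * d4 Ax' (p1 x y) (p2 x y) 0 0) * py p1 x y
        + (px p1 x y * d3 Ay' (p1 x y) (p2 x y) 0 0 + px p2 x y * d4 Ay' (p1 x y) (p2 x y) 0 0) * py p2 x y"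
      unfolding d3_def[of Ay] eqB by (rule DERIV_imp_deriv[OF Aslice[OF V PV sm'(1) sm'(2) sm'(3) sm'(4) sm'(5)]])
    show "omega_coef Ax Ay x y =
          omega_coef Ax' Ay' (p1 x y) (p2 x y) * (px p1 x y * py p2 x y - py p1 x y * px p2 x y)"
      unfolding omega_coef_def Dfun_def dA dB by (simp add: algebra_simps)
  qed
  have part2: "\<forall>x y u v. (x, y) \<in> U \<longrightarrow>
        kappa_x Bxx Bxy x y u v =
          kappa_x Bxx' Bxy' (p1 x y) (p2 x y) (vel p1 x y u v) (vel p2 x y u v) * px p1 x y
        + kappa_y Bxy' Byy' (p1 x y) (p2 x y) (vel p1 x y u v) (vel p2 x y u v) * px p2 x y
      \<and> kappa_y Bxy Byy x y u v =
          kappa_x Bxx' Bxy' (p1 x y) (p2 x y) (vel p1 x y u v) (vel p2 x y u v) * py p1 x y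
        + kappa_y Bxy' Byy' (p1 x y) (p2 x y) (vel p1 x y u v) (vel p2 x y u v) * py p2 x y"
  proof (intro allI impI)
    fix x y u v assume xy: "(x,y) \<in> U"
    have PV: "(p1 x y, p2 x y) \<in> V" using mapV[OF xy] .
    have TB1: "\<And>a b. Bxx x y a b = px p1 x y * (px p1 x y * Bxx' (p1 x y) (p2 x y) (px p1 x y * a + py p1 x y * b) (px p2 x y * a + py p2 x y * b) + px p2 x y * Bxy' (p1 x y) (p2 x y) (px p1 x y * a + py p1 x y * b) (px p2 x y * a + py p2 x y * b)) + px p2 x y * (px p1 x y * Bxy' (p1 x y) (p2 x y) (px p1 x y * a + py p1 x y * b) (px p2 x y * a + py p2 x y * b) + px p2 x y * Byy' (p1 x y) (p2 x y) (px p1 x y * a + py p1 x y * b) (px p2 x y * a + py p2 x y * b))"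
    proof -
      fix a b
      show "Bxx x y a b = px p1 x y * (px p1 x y * Bxx' (p1 x y) (p2 x y) (px p1 x y * a + py p1 x y * b) (px p2 x y * a + py p2 x y * b) + px p2 x y * Bxy' (p1 x y) (p2 x y) (px p1 x y * a + py p1 x y * b) (px p2 x y * a + py p2 x y * b)) + px p2 x y * (px p1 x y * Bxy' (p1 x y) (p2 x y) (px p1 x y * a + py p1 x y * b) (px p2 x y * a + py p2 x y * b) + px p2 x y * Byy' (p1 x y) (p2 x y) (px p1 x y * a + py p1 x y * b) (px p2 x y * a + py p2 x y * b))"
        using eps_transf[OF xy, of a b 1 0] eps_transf[OF xy, of a b 0 0]
        unfolding eps_x_def eps_y_def acc_def vel_def by (simp add: algebra_simps)
    qed
    have TB2: "\<And>a b. Bxy x y a b = px p1 x y * (py p1 x y * Bxx' (p1 x y) (p2 x y) (px p1 x y * a + py p1 x y * b) (px p2 x y * a + py p2 x y * b) + py p2 x y * Bxy' (p1 x y) (p2 x y) (px p1 x y * a + py p1 x y * b) (px p2 x y * a + py p2 x y * b)) + px p2 x y * (py p1 x y * Bxy' (p1 x y) (p2 x y) (px p1 x y * a + py p1 x y * b) (px p2 x y * a + py p2 x y * b) + py p2 x y * Byy' (p1 x y) (p2 x y) (px p1 x y * a + py p1 x y * b) (px p2 x y * a + py p2 x y * b))"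
    proof -
      fix a b
      show "Bxy x y a b = px p1 x y * (py p1 x y * Bxx' (p1 x y) (p2 x y) (px p1 x y * a + py p1 x y * b) (px p2 x y * a + py p2 x y * b) + py p2 x y * Bxy' (p1 x y) (p2 x y) (px p1 x y * a + py p1 x y * b) (px p2 x y * a + py p2 x y * b)) + px p2 x y * (py p1 x y * Bxy' (p1 x y) (p2 x y) (px p1 x y * a + py p1 x y * b) (px p2 x y * a + py p2 x y * b) + py p2 x y * Byy' (p1 x y) (p2 x y) (px p1 x y * a + py p1 x y * b) (px p2 x y * a + py p2 x y * b))"
        using eps_transf[OF xy, of a b 0 1] eps_transf[OF xy, of a b 0 0]
        unfolding eps_x_def eps_y_def acc_def vel_def by (simp add: algebra_simps)
    qed
    have TB3: "\<And>a b. Bxy x y a b = py p1 x y * (px p1 x y * Bxx' (p1 x y) (p2 x y) (px p1 x y * a + py p1 x y * b) (px p2 x y * a + py p2 x y * b) + px p2 x y * Bxy' (p1 x y) (p2 x y) (px p1 x y * a + py p1 x y * b) (px p2 x y * a + py p2 x y * b)) + py p2 x y * (px p1 x y * Bxy' (p1 x y) (p2 x y) (px p1 x y * a + py p1 x y * b) (px p2 x y * a + py p2 x y * b) + px p2 x y * Byy' (p1 x y) (p2 x y) (px p1 x y * a + py p1 x y * b) (px p2 x y * a + py p2 x y * b))"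
    proof -
      fix a b
      show "Bxy x y a b = py p1 x y * (px p1 x y * Bxx' (p1 x y) (p2 x y) (px p1 x y * a + py p1 x y * b) (px p2 x y * a + py p2 x y * b) + px p2 x y * Bxy' (p1 x y) (p2 x y) (px p1 x y * a + py p1 x y * b) (px p2 x y * a + py p2 x y * b)) + py p2 x y * (px p1 x y * Bxy' (p1 x y) (p2 x y) (px p1 x y * a + py p1 x y * b) (px p2 x y * a + py p2 x y * b) + px p2 x y * Byy' (p1 x y) (p2 x y) (px p1 x y * a + py p1 x y * b) (px p2 x y * a + py p2 x y * b))"
        using eps_transf[OF xy, of a b 1 0] eps_transf[OF xy, of a b 0 0]
        unfolding eps_x_def eps_y_def acc_def vel_def by (simp add: algebra_simps)
    qed
    have TB4: "\<And>a b. Byy x y a b = py p1 x y * (py p1 x y * Bxx' (p1 x y) (p2 x y) (px p1 x y * a + py p1 x y * b) (px p2 x y * a + py p2 x y * b) + py p2 x y * Bxy' (p1 x y) (p2 x y) (px p1 x y * a + py p1 x y * b) (px p2 x y * a + py p2 x y * b)) + py p2 x y * (py p1 x y * Bxy' (p1 x y) (p2 x y) (px p1 x y * a + py p1 x y * b) (px p2 x y * a + py p2 x y * b) + py p2 x y * Byy' (p1 x y) (p2 x y) (px p1 x y * a + py p1 x y * b) (px p2 x y * a + py p2 x y * b))"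
    proof -
      fix a b
      show "Byy x y a b = py p1 x y * (py p1 x y * Bxx' (p1 x y) (p2 x y) (px p1 x y * a + py p1 x y * b) (px p2 x y * a + py p2 x y * b) + py p2 x y * Bxy' (p1 x y) (p2 x y) (px p1 x y * a + py p1 x y * b) (px p2 x y * a + py p2 x y * b)) + py p2 x y * (py p1 x y * Bxy' (p1 x y) (p2 x y) (px p1 x y * a + py p1 x y * b) (px p2 x y * a + py p2 x y * b) + py p2 x y * Byy' (p1 x y) (p2 x y) (px p1 x y * a + py p1 x y * b) (px p2 x y * a + py p2 x y * b))"
        using eps_transf[OF xy, of a b 0 1] eps_transf[OF xy, of a b 0 0]
        unfolding eps_x_def eps_y_def acc_def vel_def by (simp add: algebra_simps)
    qed
    have HB1: "\<And>u v. d4 Bxx' (p1 x y) (p2 x y) u v = d3 Bxy' (p1 x y) (p2 x y) u v" using Hh'(1)[OF PV] .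
    have HB2: "\<And>u v. d4 Bxy' (p1 x y) (p2 x y) u v = d3 Byy' (p1 x y) (p2 x y) u v" using Hh'(2)[OF PV] .
    have kx: "- Pf Bxx Bxy x y u v = (- Pf Bxx' Bxy' (p1 x y) (p2 x y) (px p1 x y * u + py p1 x y * v) (px p2 x y * u + py p2 x y * v)) * px p1 x y
       + (- Pf Bxy' Byy' (p1 x y) (p2 x y) (px p1 x y * u + py p1 x y * v) (px p2 x y * u + py p2 x y * v)) * px p2 x y"
      using kappa_generic[OF U V sm(3) sm(4) xy Hh(1)[OF xy] sm'(3) sm'(4) sm'(5) PV HB1 HB2, where ma="px p1 x y" and mb="py p1 x y" and mc="px p2 x y" and md="py p2 x y" and a=u and b=v and ca="px p1 x y" and cb="px p2 x y"] TB1 TB2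
      by blast
    have ky: "- Pf Bxy Byy x y u v = (- Pf Bxx' Bxy' (p1 x y) (p2 x y) (px p1 x y * u + py p1 x y * v) (px p2 x y * u + py p2 x y * v)) * py p1 x y
       + (- Pf Bxy' Byy' (p1 x y) (p2 x y) (px p1 x y * u + py p1 x y * v) (px p2 x y * u + py p2 x y * v)) * py p2 x y"
      using kappa_generic[OF U V sm(4) sm(5) xy Hh(2)[OF xy] sm'(3) sm'(4) sm'(5) PV HB1 HB2, where ma="px p1 x y" and mb="py p1 x y" and mc="px p2 x y" and md="py p2 x y" and a=u and b=v and ca="py p1 x y" and cb="py p2 x y"] TB3 TB4
      by blast
    show "kappa_x Bxx Bxy x y u v =
          kappa_x Bxx' Bxy' (p1 x y) (p2 x y) (vel p1 x y u v) (vel p2 x y u v) * px p1 x y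
        + kappa_y Bxy' Byy' (p1 x y) (p2 x y) (vel p1 x y u v) (vel p2 x y u v) * px p2 x y
      \<and> kappa_y Bxy Byy x y u v =
          kappa_x Bxx' Bxy' (p1 x y) (p2 x y) (vel p1 x y u v) (vel p2 x y u v) * py p1 x y
        + kappa_y Bxy' Byy' (p1 x y) (p2 x y) (vel p1 x y u v) (vel p2 x y u v) * py p2 x y"
      using kx ky by (simp add: kappa_Pf vel_def)
  qed
  have part3: "\<forall>x y u v. (x, y) \<in> U \<longrightarrow>
        d1 (kappa_y Bxy Byy) x y u v - d2 (kappa_x Bxx Bxy) x y u v
          = Dfun Ax Ay x y u v / 2 - omega_coef Ax Ay x y
      \<and> - d3 (kappa_x Bxx Bxy) x y u v = Bxx x y u v
      \<and> - d4 (kappa_x Bxx Bxy) x y u v = Bxy x y u v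
      \<and> - d3 (kappa_y Bxy Byy) x y u v = Bxy x y u v
      \<and> - d4 (kappa_y Bxy Byy) x y u v = Byy x y u v"
    using part3[OF U lv] by blast
  show ?thesis using part1 part2 part3 by blast
qed

end
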